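(* Let $S>0$, $I\ge1$, $J\in\{1,\dots,I\}$, $N_1,\dots,N_I$ positive integers and $\theta_1>\dots>\theta_I>0$. Consider the partial price differentiation problem: maximize $\sum_{i=1}^I n_ip_is_i$ over prices $p^1,\dots,p^J>0$, assignments $a_i^j\in\{0,1\}$ with $\sum_{j=1}^J a_i^j=1$ for each $i$, and $n_i\in\{0,\dots,N_i\}$, subject to $p_i=\sum_{j=1}^J a_i^jp^j$, $s_i=(\theta_i/p_i-1)^+$ for each $i$, and $\sum_{i=1}^I n_is_i\le S$. Call group $i$ effective if $n_is_i>0$, and for each $j$ call the set of effective groups $i$ with $a_i^j=1$ the $j$-th cluster. Then this problem has an optimal solution in which every cluster consists of consecutive integers, i.e. is of the form $\{l,l+1,\dots,m\}$ (or is empty).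
   Context: Group $i$ consists of $N_i$ users each with utility $\theta_i\ln(1+s)$; a user facing unit price $p$ demands $(\theta_i/p-1)^+$, where $(x)^+=\max(x,0)$. The service provider has total resource $S$ and may use at most $J$ distinct unit prices, each group being charged one of them. *)

theory Defs
  imports Complex_Main
begin

definition pos_part :: "real \<Rightarrow> real" where
  "pos_part x = max x 0"

definition group_price :: "nat \<Rightarrow> (nat \<Rightarrow> real) \<Rightarrow> (nat \<Rightarrow> nat \<Rightarrow> nat) \<Rightarrow> nat \<Rightarrow> real" where
  "group_price J p a i = (\<Sum>j=1..J. real (a i j) * p j)"

definition group_demand :: "(nat \<Rightarrow> real) \<Rightarrow> nat \<Rightarrow> (nat \<Rightarrow> real) \<Rightarrow> (nat \<Rightarrow> nat \<Rightarrow> nat) \<Rightarrow> nat \<Rightarrow> real" where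
  "group_demand \<theta> J p a i = pos_part (\<theta> i / group_price J p a i - 1)"

definition ppd_feasible ::
  "real \<Rightarrow> nat \<Rightarrow> nat \<Rightarrow> (nat \<Rightarrow> nat) \<Rightarrow> (nat \<Rightarrow> real)
   \<Rightarrow> (nat \<Rightarrow> real) \<Rightarrow> (nat \<Rightarrow> nat \<Rightarrow> nat) \<Rightarrow> (nat \<Rightarrow> nat) \<Rightarrow> bool" where
  "ppd_feasible S I J N \<theta> p a n \<longleftrightarrow>
     (\<forall>j\<in>{1..J}. p j > 0) \<and>
     (\<forall>i\<in>{1..I}. \<forall>j\<in>{1..J}. a i j \<in> {0, 1}) \<and>
     (\<forall>i\<in>{1..I}. (\<Sum>j=1..J. a i j) = 1) \<and>
     (\<forall>i\<in>{1..I}. n i \<le> N i) \<and>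
     (\<Sum>i=1..I. real (n i) * group_demand \<theta> J p a i) \<le> S"

definition ppd_revenue ::
  "nat \<Rightarrow> nat \<Rightarrow> (nat \<Rightarrow> real) \<Rightarrow> (nat \<Rightarrow> real) \<Rightarrow> (nat \<Rightarrow> nat \<Rightarrow> nat) \<Rightarrow> (nat \<Rightarrow> nat) \<Rightarrow> real" where
  "ppd_revenue I J \<theta> p a n =
     (\<Sum>i=1..I. real (n i) * group_price J p a i * group_demand \<theta> J p a i)"

definition cluster ::
  "nat \<Rightarrow> nat \<Rightarrow> (nat \<Rightarrow> real) \<Rightarrow> (nat \<Rightarrow> real) \<Rightarrow> (nat \<Rightarrow> nat \<Rightarrow> nat) \<Rightarrow> (nat \<Rightarrow> nat) \<Rightarrow> nat \<Rightarrow> nat set" where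
  "cluster I J \<theta> p a n j =
     {i \<in> {1..I}. real (n i) * group_demand \<theta> J p a i > 0 \<and> a i j = 1}"

end

theory Submission
  imports Defs
begin

lemma sum_group:
  assumes "finite A" "finite D"
  shows "(\<Sum>d\<in>D. \<Sum>i\<in>A. if c i = d then g i d else 0) = (\<Sum>i\<in>A. if c i \<in> D then g i (c i) else (0::real))"
proof -
  have "(\<Sum>d\<in>D. \<Sum>i\<in>A. if c i = d then g i d else 0) = (\<Sum>i\<in>A. \<Sum>d\<in>D. if c i = d then g i d else (0::real))"
    by (rule sum.swap)
  also have "\<dots> = (\<Sum>i\<in>A. if c i \<in> D then g i (c i) else 0)"
  proof (rule sum.cong[OF refl])
    fix i assume "i \<in> A"
    have "(\<Sum>d\<in>D. if c i = d then g i d else (0::real)) = (\<Sum>d\<in>D. if c i = d then g i (c i) else 0)"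
      by (rule sum.cong) auto
    also have "\<dots> = (if c i \<in> D then g i (c i) else 0)"
      using assms(2) by (simp add: sum.delta)
    finally show "(\<Sum>d\<in>D. if c i = d then g i d else (0::real)) = (if c i \<in> D then g i (c i) else 0)" .
  qed
  finally show ?thesis .
qed

locale ppd =
  fixes S :: real and I J :: nat and N :: "nat \<Rightarrow> nat" and th :: "nat \<Rightarrow> real"
  assumes S_pos: "S > 0" and J_ge: "1 \<le> J"
    and N_pos: "\<forall>i\<in>{1..I}. N i > 0" and th_pos: "\<forall>i\<in>{1..I}. th i > 0"
    and th_dec: "\<forall>i\<in>{1..I}. \<forall>k\<in>{1..I}. i < k \<longrightarrow> th k < th i"
begin

definition cn :: "(nat \<Rightarrow> nat) \<Rightarrow> (nat \<Rightarrow> nat) \<Rightarrow> nat \<Rightarrow> real" where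
  "cn w c d = (\<Sum>i=1..I. if c i = d then real (w i) else 0)"
definition cT :: "(nat \<Rightarrow> nat) \<Rightarrow> (nat \<Rightarrow> nat) \<Rightarrow> nat \<Rightarrow> real" where
  "cT w c d = (\<Sum>i=1..I. if c i = d then real (w i) * th i else 0)"
definition Ff :: "(nat \<Rightarrow> nat) \<Rightarrow> (nat \<Rightarrow> nat) \<Rightarrow> real" where
  "Ff w c = (\<Sum>d=1..J. sqrt (cn w c d * cT w c d))"
definition nt :: "(nat \<Rightarrow> nat) \<Rightarrow> real" where
  "nt w = (\<Sum>i=1..I. real (w i))"
definition Tt :: "(nat \<Rightarrow> nat) \<Rightarrow> real" where
  "Tt w = (\<Sum>i=1..I. real (w i) * th i)"
definition mu :: "(nat \<Rightarrow> nat) \<Rightarrow> (nat \<Rightarrow> nat) \<Rightarrow> real" where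
  "mu w c = Ff w c / (S + nt w)"
definition Vv :: "(nat \<Rightarrow> nat) \<Rightarrow> (nat \<Rightarrow> nat) \<Rightarrow> real" where
  "Vv w c = Tt w - mu w c * Ff w c"
definition psi :: "real \<Rightarrow> real \<Rightarrow> real \<Rightarrow> real" where
  "psi n T m = (max (sqrt T - m * sqrt n) 0)\<^sup>2"
definition cfg :: "(nat \<Rightarrow> nat) \<Rightarrow> bool" where
  "cfg c \<longleftrightarrow> (\<forall>i\<in>{1..I}. c i \<in> {1..J})"
definition cons :: "(nat \<Rightarrow> nat) \<Rightarrow> (nat \<Rightarrow> nat) \<Rightarrow> bool" where
  "cons w c \<longleftrightarrow> (\<forall>d\<in>{1..J}. cn w c d > 0 \<longrightarrow> sqrt (cT w c d) > mu w c * sqrt (cn w c d))"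
definition good :: "(nat \<Rightarrow> nat) \<Rightarrow> (nat \<Rightarrow> nat) \<Rightarrow> bool" where
  "good w c \<longleftrightarrow> (\<forall>i\<in>{1..I}. w i > 0 \<longrightarrow> th i > (mu w c)\<^sup>2)"
definition mono :: "(nat \<Rightarrow> nat) \<Rightarrow> (nat \<Rightarrow> nat) \<Rightarrow> bool" where
  "mono w c \<longleftrightarrow> (\<forall>i\<in>{1..I}. \<forall>g\<in>{1..I}. \<forall>k\<in>{1..I}. i < g \<and> g < k \<and> w i > 0 \<and> w g > 0 \<and> w k > 0 \<and> c i = c k \<longrightarrow> c g = c i)"

lemma cn_nonneg: "cn w c d \<ge> 0"
  unfolding cn_def by (rule sum_nonneg) auto
lemma th_pos': "i \<in> {1..I} \<Longrightarrow> th i > 0"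
  using th_pos by blast
lemma cT_nonneg: "cT w c d \<ge> 0"
  unfolding cT_def by (rule sum_nonneg) (auto simp: th_pos' less_imp_le)
lemma nt_nonneg: "nt w \<ge> 0"
  unfolding nt_def by (rule sum_nonneg) auto
lemma Ff_nonneg: "Ff w c \<ge> 0"
  unfolding Ff_def by (rule sum_nonneg) (simp add: cn_nonneg cT_nonneg)
lemma mu_nonneg: "mu w c \<ge> 0"
  unfolding mu_def using Ff_nonneg nt_nonneg S_pos by simp

lemma cn_zero_cT: "cn w c d = 0 \<Longrightarrow> cT w c d = 0"
proof -
  assume "cn w c d = 0"
  then have "\<forall>i\<in>{1..I}. (if c i = d then real (w i) else 0) = 0"
    unfolding cn_def by (subst sum_nonneg_eq_0_iff[symmetric]) auto
  then show "cT w c d = 0" unfolding cT_def by (intro sum.neutral) auto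
qed

lemma sum_cn: "cfg c \<Longrightarrow> (\<Sum>d=1..J. cn w c d) = nt w"
  unfolding cn_def nt_def cfg_def by (subst sum_group) auto
lemma sum_cT: "cfg c \<Longrightarrow> (\<Sum>d=1..J. cT w c d) = Tt w"
  unfolding cT_def Tt_def cfg_def by (subst sum_group) auto


lemma dual1:
  fixes n T r m :: real
  assumes "n \<ge> 0" "T \<ge> 0" "r > 0" "n * r \<le> T" "m \<ge> 0"
  shows "T - n * r - m\<^sup>2 * (T / r - n) \<le> psi n T m"
proof (cases "sqrt T \<ge> m * sqrt n")
  case True
  define a where "a = sqrt n"
  define b where "b = sqrt T"
  have n: "n = a\<^sup>2" and T: "T = b\<^sup>2" using assms a_def b_def by simp_all
  have ps: "psi n T m = (b - m * a)\<^sup>2" unfolding psi_def using True a_def b_def by simp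
  have "(a * r - m * b)\<^sup>2 \<ge> 0" by simp
  then have "2 * m * a * b * r \<le> a\<^sup>2 * r\<^sup>2 + m\<^sup>2 * b\<^sup>2" by (simp add: power2_eq_square algebra_simps)
  then have "2 * m * a * b \<le> a\<^sup>2 * r + m\<^sup>2 * b\<^sup>2 / r" using assms(3)
    by (simp add: field_simps power2_eq_square)
  then have "b\<^sup>2 - a\<^sup>2 * r - m\<^sup>2 * (b\<^sup>2 / r - a\<^sup>2) \<le> (b - m * a)\<^sup>2" by (simp add: power2_eq_square algebra_simps)
  then show ?thesis using ps n T by simp
next
  case False
  then have ps: "psi n T m = 0" unfolding psi_def by simp
  have sn: "sqrt n > 0" using False assms by (metis less_eq_real_def mult_zero_right real_sqrt_ge_zero real_sqrt_gt_0_iff)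
  then have n0: "n > 0" by simp
  have "sqrt T < m * sqrt n" using False by simp
  then have "(sqrt T)\<^sup>2 < (m * sqrt n)\<^sup>2" using assms by (intro power_strict_mono) auto
  then have "T < m\<^sup>2 * n" using assms by (simp add: power_mult_distrib)
  then have "n * r < n * m\<^sup>2" using assms by (simp add: algebra_simps)
  then have rm: "r < m\<^sup>2" using n0 by simp
  have "T / r - n \<ge> 0" using assms by (simp add: field_simps)
  moreover have "T - n * r - m\<^sup>2 * (T / r - n) = (T / r - n) * (r - m\<^sup>2)"
    using assms(3) by (simp add: field_simps)
  ultimately show ?thesis unfolding ps using rm by (simp add: mult_nonneg_nonpos)
qed

lemma dual_tot:
  assumes "cfg c" "\<forall>d\<in>{1..J}. r d > 0" "\<forall>d\<in>{1..J}. cn w c d * r d \<le> cT w c d"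
    "(\<Sum>d=1..J. cT w c d / r d - cn w c d) \<le> S" "m \<ge> 0"
  shows "(\<Sum>d=1..J. cT w c d - cn w c d * r d) \<le> m\<^sup>2 * S + (\<Sum>d=1..J. psi (cn w c d) (cT w c d) m)"
proof -
  have "(\<Sum>d=1..J. cT w c d - cn w c d * r d) \<le> (\<Sum>d=1..J. m\<^sup>2 * (cT w c d / r d - cn w c d) + psi (cn w c d) (cT w c d) m)"
  proof (rule sum_mono)
    fix d assume "d \<in> {1..J}"
    then show "cT w c d - cn w c d * r d \<le> m\<^sup>2 * (cT w c d / r d - cn w c d) + psi (cn w c d) (cT w c d) m"
      using dual1[of "cn w c d" "cT w c d" "r d" m] assms cn_nonneg cT_nonneg by auto
  qed
  also have "\<dots> = m\<^sup>2 * (\<Sum>d=1..J. cT w c d / r d - cn w c d) + (\<Sum>d=1..J. psi (cn w c d) (cT w c d) m)"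
    by (simp add: sum.distrib sum_distrib_left)
  also have "\<dots> \<le> m\<^sup>2 * S + (\<Sum>d=1..J. psi (cn w c d) (cT w c d) m)"
    using assms(4) by (simp add: mult_left_mono)
  finally show ?thesis .
qed

definition restr :: "(nat \<Rightarrow> nat) \<Rightarrow> (nat \<Rightarrow> nat) \<Rightarrow> nat set \<Rightarrow> nat \<Rightarrow> nat" where
  "restr w c D = (\<lambda>i. if c i \<in> D then w i else 0)"

lemma cn_restr: "cn (restr w c D) c d = (if d \<in> D then cn w c d else 0)"
  unfolding cn_def restr_def by (auto intro!: sum.cong sum.neutral)
lemma cT_restr: "cT (restr w c D) c d = (if d \<in> D then cT w c d else 0)"
  unfolding cT_def restr_def by (auto intro!: sum.cong sum.neutral)

lemma Ff_restr: "D \<subseteq> {1..J} \<Longrightarrow> Ff (restr w c D) c = (\<Sum>d\<in>D. sqrt (cn w c d * cT w c d))"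
  unfolding Ff_def cn_restr cT_restr
  by (simp add: if_distrib sum.If_cases Int_absorb1 Int_absorb2)
lemma nt_restr: "cfg c \<Longrightarrow> D \<subseteq> {1..J} \<Longrightarrow> nt (restr w c D) = (\<Sum>d\<in>D. cn w c d)"
  by (subst sum_cn[symmetric], assumption) (simp add: cn_restr sum.If_cases Int_absorb1 Int_absorb2)
lemma Tt_restr: "cfg c \<Longrightarrow> D \<subseteq> {1..J} \<Longrightarrow> Tt (restr w c D) = (\<Sum>d\<in>D. cT w c d)"
  by (subst sum_cT[symmetric], assumption) (simp add: cT_restr sum.If_cases Int_absorb1 Int_absorb2)


lemma mu_restr: "cfg c \<Longrightarrow> D \<subseteq> {1..J} \<Longrightarrow>
  mu (restr w c D) c = (\<Sum>d\<in>D. sqrt (cn w c d * cT w c d)) / (S + (\<Sum>d\<in>D. cn w c d))"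
  unfolding mu_def by (simp add: Ff_restr nt_restr)

lemma sum_cn_D_nonneg: "(\<Sum>d\<in>D. cn w c d) \<ge> 0"
  by (rule sum_nonneg) (simp add: cn_nonneg)

lemma sqrt_cancel_less: fixes x r y :: real assumes "x > 0" "r * x < sqrt x * y" shows "r * sqrt x < y"
proof -
  have "sqrt x * (r * sqrt x) < sqrt x * y" using assms by (simp add: algebra_simps)
  then show ?thesis using assms(1) by (simp add: mult_less_cancel_left_pos)
qed
lemma sqrt_cancel_le: fixes x r y :: real assumes "x > 0" "sqrt x * y \<le> r * x" shows "y \<le> r * sqrt x"
proof -
  have "sqrt x * y \<le> sqrt x * (r * sqrt x)" using assms by (simp add: algebra_simps)
  then show ?thesis using assms(1) by (simp add: mult_le_cancel_left_pos)
qed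

lemma cons_exists:
  assumes cfg: "cfg c"
  shows "\<exists>D\<subseteq>{1..J}. cons (restr w c D) c \<and>
    (mu (restr w c D) c)\<^sup>2 * S + (\<Sum>d=1..J. psi (cn w c d) (cT w c d) (mu (restr w c D) c)) \<le> Vv (restr w c D) c"
proof -
  define f where "f d = sqrt (cn w c d * cT w c d)" for d
  define r where "r D = (\<Sum>d\<in>D. f d) / (S + (\<Sum>d\<in>D. cn w c d))" for D
  have rmu: "D \<subseteq> {1..J} \<Longrightarrow> mu (restr w c D) c = r D" for D
    using mu_restr[OF cfg] unfolding r_def f_def by simp
  have den: "S + (\<Sum>d\<in>D. cn w c d) > 0" for D using S_pos sum_cn_D_nonneg[where D=D and w=w and c=c] by linarith
  define P where "P = Pow {1..J}"
  have finP: "finite P" and neP: "P \<noteq> {}" unfolding P_def by auto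
  define Mx where "Mx = Max (r ` P)"
  obtain D1 where D1: "D1 \<in> P" "r D1 = Mx" unfolding Mx_def using finP neP
    by (metis (no_types, lifting) Max_in finite_imageI image_iff image_is_empty)
  obtain D0 where D0: "D0 \<in> P \<and> r D0 = Mx" and D0min: "\<forall>D. D \<in> P \<and> r D = Mx \<longrightarrow> card D0 \<le> card D"
    using ex_has_least_nat[of "\<lambda>D. D \<in> P \<and> r D = Mx" D1 card] D1 by blast
  have rmax: "D \<in> P \<Longrightarrow> r D \<le> r D0" for D using D0 finP unfolding Mx_def by simp
  have D0sub: "D0 \<subseteq> {1..J}" using D0 unfolding P_def by simp
  have finD0: "finite D0" using D0sub finite_subset by blast
  define r0 where "r0 = r D0"
  define F0 where "F0 = (\<Sum>d\<in>D0. f d)"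
  define n0 where "n0 = (\<Sum>d\<in>D0. cn w c d)"
  have F0eq: "F0 = r0 * (S + n0)" unfolding F0_def r0_def r_def n0_def using den[of D0] by simp
  have r0nn: "r0 \<ge> 0" unfolding r0_def r_def using den[of D0] by (intro divide_nonneg_pos sum_nonneg) (auto simp: f_def cn_nonneg cT_nonneg)
  have fnn: "f d \<ge> 0" for d unfolding f_def by (simp add: cn_nonneg cT_nonneg)
  have fsplit: "f d = sqrt (cn w c d) * sqrt (cT w c d)" for d unfolding f_def by (simp add: real_sqrt_mult)
  have a: "f d > r0 * cn w c d" if "d \<in> D0" for d
  proof (rule ccontr)
    assume "\<not> f d > r0 * cn w c d"
    then have fd: "f d \<le> r0 * cn w c d" by simp
    define D' where "D' = D0 - {d}"
    have "(\<Sum>x\<in>D'. f x) = F0 - f d" unfolding D'_def F0_def using that finD0 by (simp add: sum_diff1)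
    moreover have "(\<Sum>x\<in>D'. cn w c x) = n0 - cn w c d" unfolding D'_def n0_def using that finD0 by (simp add: sum_diff1)
    ultimately have rD': "r D' = (F0 - f d) / (S + (n0 - cn w c d))" unfolding r_def by simp
    have "F0 - f d \<ge> r0 * (S + (n0 - cn w c d))" using F0eq fd by (simp add: algebra_simps)
    then have "r D' \<ge> r0" unfolding rD' using den[of D'] \<open>(\<Sum>x\<in>D'. cn w c x) = n0 - cn w c d\<close>
      by (simp add: pos_le_divide_eq)
    moreover have "D' \<in> P" using D0 unfolding D'_def P_def by auto
    ultimately have "r D' = Mx" using rmax[of D'] D0 unfolding r0_def by simp
    then have "card D0 \<le> card D'" using D0min \<open>D' \<in> P\<close> by blast
    moreover have "card D' < card D0" unfolding D'_def using that finD0 by (meson card_Diff1_less)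
    ultimately show False by simp
  qed
  have b: "f d \<le> r0 * cn w c d" if "d \<in> {1..J}" "d \<notin> D0" for d
  proof (rule ccontr)
    assume "\<not> f d \<le> r0 * cn w c d"
    then have fd: "f d > r0 * cn w c d" by simp
    define D' where "D' = insert d D0"
    have "(\<Sum>x\<in>D'. f x) = F0 + f d" unfolding D'_def F0_def using that finD0 by simp
    moreover have s2: "(\<Sum>x\<in>D'. cn w c x) = n0 + cn w c d" unfolding D'_def n0_def using that finD0 by simp
    ultimately have rD': "r D' = (F0 + f d) / (S + (n0 + cn w c d))" unfolding r_def by simp
    have "F0 + f d > r0 * (S + (n0 + cn w c d))" using F0eq fd by (simp add: algebra_simps)
    then have "r D' > r0" unfolding rD' using den[of D'] s2
      by (simp add: pos_less_divide_eq)
    moreover have "D' \<in> P" using D0 that unfolding D'_def P_def by auto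
    ultimately show False using rmax[of D'] unfolding r0_def by simp
  qed
  have mu0: "mu (restr w c D0) c = r0" using rmu[OF D0sub] unfolding r0_def .
  have cons0: "cons (restr w c D0) c"
    unfolding cons_def
  proof (intro ballI impI)
    fix d assume d: "d \<in> {1..J}" and pos: "0 < cn (restr w c D0) c d"
    then have dD: "d \<in> D0" and cpos: "cn w c d > 0" unfolding cn_restr by (auto split: if_splits)
    have "sqrt (cT w c d) > r0 * sqrt (cn w c d)" using cpos a[OF dD] fsplit[of d]
      by (intro sqrt_cancel_less) simp_all
    then show "mu (restr w c D0) c * sqrt (cn (restr w c D0) c d) < sqrt (cT (restr w c D0) c d)"
      unfolding mu0 cn_restr cT_restr using dD by simp
  qed
  have psiD: "psi (cn w c d) (cT w c d) r0 = (if d \<in> D0 then cT w c d - 2 * r0 * f d + r0\<^sup>2 * cn w c d else 0)"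
    if "d \<in> {1..J}" for d
  proof (cases "d \<in> D0")
    case True
    have ge: "sqrt (cT w c d) \<ge> r0 * sqrt (cn w c d)"
    proof (cases "cn w c d > 0")
      case True
      show ?thesis using True a[OF \<open>d \<in> D0\<close>] fsplit[of d]
        using sqrt_cancel_less[of "cn w c d" r0 "sqrt (cT w c d)"] by simp
    next
      case False
      then have "cn w c d = 0" using cn_nonneg[of w c d] by simp
      then show ?thesis by (simp add: cT_nonneg)
    qed
    have "psi (cn w c d) (cT w c d) r0 = (sqrt (cT w c d) - r0 * sqrt (cn w c d))\<^sup>2"
      unfolding psi_def using ge by simp
    also have "\<dots> = cT w c d - 2 * r0 * f d + r0\<^sup>2 * cn w c d"
      using cn_nonneg[of w c d] cT_nonneg[of w c d] fsplit[of d]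
      by (simp add: power2_eq_square algebra_simps)
    finally show ?thesis using True by simp
  next
    case False
    have le: "sqrt (cT w c d) \<le> r0 * sqrt (cn w c d)"
    proof (cases "cn w c d > 0")
      case True
      show ?thesis using True b[OF that False] fsplit[of d]
        using sqrt_cancel_le[of "cn w c d" "sqrt (cT w c d)" r0] by simp
    next
      case False
      then have "cn w c d = 0" using cn_nonneg[of w c d] by simp
      then have "cT w c d = 0" by (rule cn_zero_cT)
      then show ?thesis using r0nn cn_nonneg[of w c d] by simp
    qed
    show ?thesis unfolding psi_def using le False by simp
  qed
  have "(\<Sum>d=1..J. psi (cn w c d) (cT w c d) r0) = (\<Sum>d=1..J. if d \<in> D0 then cT w c d - 2 * r0 * f d + r0\<^sup>2 * cn w c d else 0)"
    by (rule sum.cong) (auto simp: psiD)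
  also have "\<dots> = (\<Sum>d\<in>D0. cT w c d - 2 * r0 * f d + r0\<^sup>2 * cn w c d)"
    using D0sub by (simp add: sum.If_cases Int_absorb1 Int_absorb2)
  also have "\<dots> = Tt (restr w c D0) - 2 * r0 * F0 + r0\<^sup>2 * n0"
    unfolding Tt_restr[OF cfg D0sub] F0_def n0_def
    by (simp add: sum.distrib sum_subtractf sum_distrib_left)
  finally have sp: "(\<Sum>d=1..J. psi (cn w c d) (cT w c d) r0) = Tt (restr w c D0) - 2 * r0 * F0 + r0\<^sup>2 * n0" .
  have Vv0: "Vv (restr w c D0) c = Tt (restr w c D0) - r0 * F0"
    unfolding Vv_def mu0 using Ff_restr[OF D0sub] unfolding F0_def f_def by simp
  have "r0\<^sup>2 * S + (\<Sum>d=1..J. psi (cn w c d) (cT w c d) r0) = Vv (restr w c D0) c"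
    unfolding sp Vv0 using F0eq by (simp add: power2_eq_square algebra_simps)
  then show ?thesis using D0sub cons0 mu0 by (intro exI[of _ D0]) simp
qed

end

context ppd begin

lemma wth_nonneg: "1 \<le> i \<Longrightarrow> i \<le> I \<Longrightarrow> 0 \<le> real (w i) * th i"
  using th_pos'[of i] by simp

lemma from_priceconfig:
  assumes "cfg c" "\<forall>d\<in>{1..J}. r d > 0" "\<forall>d\<in>{1..J}. cn w c d * r d \<le> cT w c d"
    "(\<Sum>d=1..J. cT w c d / r d - cn w c d) \<le> S"
  shows "\<exists>D\<subseteq>{1..J}. cons (restr w c D) c \<and> (\<Sum>d=1..J. cT w c d - cn w c d * r d) \<le> Vv (restr w c D) c"
proof -
  obtain D where D: "D \<subseteq> {1..J}" "cons (restr w c D) c"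
    "(mu (restr w c D) c)\<^sup>2 * S + (\<Sum>d=1..J. psi (cn w c d) (cT w c d) (mu (restr w c D) c)) \<le> Vv (restr w c D) c"
    using cons_exists[OF assms(1)] by blast
  have "(\<Sum>d=1..J. cT w c d - cn w c d * r d) \<le> (mu (restr w c D) c)\<^sup>2 * S + (\<Sum>d=1..J. psi (cn w c d) (cT w c d) (mu (restr w c D) c))"
    using dual_tot[OF assms mu_nonneg] .
  then show ?thesis using D by (intro exI[of _ D]) simp
qed

lemma cn_pos_member: "cn w c d > 0 \<Longrightarrow> \<exists>i\<in>{1..I}. c i = d \<and> w i > 0"
proof (rule ccontr)
  assume "cn w c d > 0" "\<not> (\<exists>i\<in>{1..I}. c i = d \<and> w i > 0)"
  then have "cn w c d = 0" unfolding cn_def by (intro sum.neutral) auto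
  then show False using \<open>cn w c d > 0\<close> by simp
qed

lemma member_cn_pos: "i \<in> {1..I} \<Longrightarrow> w i > 0 \<Longrightarrow> cn w c (c i) > 0"
proof -
  assume i: "i \<in> {1..I}" "w i > 0"
  have "cn w c (c i) \<ge> (if c i = c i then real (w i) else 0)"
    unfolding cn_def by (rule member_le_sum) (use i in auto)
  then show ?thesis using i by simp
qed

lemma Ff_pos_member: "i \<in> {1..I} \<Longrightarrow> w i > 0 \<Longrightarrow> cfg c \<Longrightarrow> Ff w c > 0"
proof -
  assume i: "i \<in> {1..I}" "w i > 0" and cfg: "cfg c"
  have ci: "c i \<in> {1..J}" using cfg i unfolding cfg_def by blast
  have cnp: "cn w c (c i) > 0" using member_cn_pos[of i w c] i by simp
  have "cT w c (c i) \<ge> (if c i = c i then real (w i) * th i else 0)"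
    unfolding cT_def by (rule member_le_sum) (use i in \<open>auto simp: wth_nonneg\<close>)
  moreover have "real (w i) * th i > 0" using i th_pos'[OF i(1)] by simp
  ultimately have ctp: "cT w c (c i) > 0" by simp
  have "Ff w c \<ge> sqrt (cn w c (c i) * cT w c (c i))"
    unfolding Ff_def by (rule member_le_sum) (use ci in \<open>auto simp: cn_nonneg cT_nonneg\<close>)
  moreover have "sqrt (cn w c (c i) * cT w c (c i)) > 0" using cnp ctp by simp
  ultimately show ?thesis by linarith
qed


lemma sqrt_mul_split: "x \<ge> 0 \<Longrightarrow> y \<ge> 0 \<Longrightarrow> sqrt (x * y) = sqrt x * sqrt (y::real)"
  by (simp add: real_sqrt_mult)

lemma drop_step:
  assumes cfg: "cfg c" and cons: "cons w c" and b: "b \<in> {1..I}" "w b > 0"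
    and bad_b: "th b * sqrt (cn w c (c b)) \<le> mu w c * sqrt (cT w c (c b))"
  shows "\<exists>w2. (\<forall>i. w2 i = 0 \<or> w2 i = w i) \<and> cons w2 c \<and> Vv w c \<le> Vv w2 c \<and> (\<Sum>i=1..I. w2 i) < (\<Sum>i=1..I. w i)"
proof -
  define m where "m = mu w c"
  have Fpos: "Ff w c > 0" using Ff_pos_member[of b w c] b cfg by simp
  have den: "S + nt w > 0" using S_pos nt_nonneg[of w] by linarith
  have mpos: "m > 0" unfolding m_def mu_def using Fpos den by simp
  have Feq: "Ff w c = m * (S + nt w)" unfolding m_def mu_def using den by simp
  define bad where "bad i \<longleftrightarrow> w i > 0 \<and> th i * sqrt (cn w c (c i)) \<le> m * sqrt (cT w c (c i))" for i
  define w1 where "w1 i = (if bad i then 0 else w i)" for i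
  define f where "f d = sqrt (cn w c d * cT w c d)" for d
  define U where "U d = f d / m - cn w c d" for d
  define rho where "rho d = m * sqrt (cT w c d) / sqrt (cn w c d)" for d
  define rho1 where "rho1 d = (if cn w c d > 0 then cT w1 c d / (U d + cn w1 c d) else 1)" for d
  have w1le: "w1 i \<le> w i" for i unfolding w1_def by simp
  have cn1le: "cn w1 c d \<le> cn w c d" for d unfolding cn_def by (rule sum_mono) (simp add: w1le)
  have fsplit: "f d = sqrt (cn w c d) * sqrt (cT w c d)" for d
    unfolding f_def using cn_nonneg cT_nonneg by (simp add: sqrt_mul_split)
  have key: "rho1 d > 0 \<and> cn w1 c d * rho1 d \<le> cT w1 c d \<and> cT w1 c d / rho1 d - cn w1 c d = f d / m - cn w c d
     \<and> cT w1 c d - cn w1 c d * rho1 d \<ge> cT w c d - m * f d" if d: "d \<in> {1..J}" for d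
  proof (cases "cn w c d > 0")
    case False
    then have cn0: "cn w c d = 0" using cn_nonneg[of w c d] by simp
    then have cn10: "cn w1 c d = 0" using cn1le[of d] cn_nonneg[of w1 c d] by simp
    have "cT w c d = 0" "cT w1 c d = 0" using cn0 cn10 cn_zero_cT by auto
    then show ?thesis using cn0 cn10 unfolding rho1_def f_def by simp
  next
    case True
    note cnp = True
    have sc: "sqrt (cT w c d) > m * sqrt (cn w c d)" using cons d True unfolding cons_def m_def by blast
    define sq where "sq = sqrt (cn w c d)"
    define tq where "tq = sqrt (cT w c d)"
    have scn: "sq > 0" using True unfolding sq_def by simp
    have cnst: "cn w c d = sq * sq" unfolding sq_def using cn_nonneg[of w c d] by simp
    have ctst: "cT w c d = tq * tq" unfolding tq_def using cT_nonneg[of w c d] by simp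
    have fst': "f d = sq * tq" unfolding fsplit sq_def tq_def ..
    have rhoe: "rho d = m * tq / sq" unfolding rho_def sq_def tq_def ..
    have tgt: "tq > m * sq" using sc unfolding sq_def tq_def .
    have tpos: "tq > 0" using tgt mpos scn by (smt (verit) mult_pos_pos)
    have fgt: "f d > m * cn w c d"
    proof -
      have "sq * tq > sq * (m * sq)" using tgt scn by (simp add: mult_strict_left_mono)
      then show ?thesis unfolding fst' cnst by (simp add: algebra_simps)
    qed
    have Upos: "U d > 0" unfolding U_def using fgt mpos by (simp add: field_simps)
    have rhopos: "rho d > 0" unfolding rhoe using mpos scn tpos by simp
    have eq1: "cT w c d - rho d * cn w c d = rho d * U d"
      unfolding U_def rhoe fst' cnst ctst using mpos scn by (simp add: field_simps)
    have rcn: "rho d * cn w c d = m * f d"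
      unfolding rhoe fst' cnst using scn by (simp add: field_simps)
    have termwise: "cT w1 c d - rho d * cn w1 c d \<ge> cT w c d - rho d * cn w c d"
    proof -
      have e1: "cT v c d - rho d * cn v c d = (\<Sum>i=1..I. if c i = d then real (v i) * (th i - rho d) else 0)" for v
      proof -
        have "(\<Sum>i=1..I. if c i = d then real (v i) * (th i - rho d) else 0)
          = (\<Sum>i=1..I. (if c i = d then real (v i) * th i else 0) - rho d * (if c i = d then real (v i) else 0))"
          by (rule sum.cong) (auto simp: algebra_simps)
        then show ?thesis unfolding cT_def cn_def by (simp add: sum_subtractf sum_distrib_left)
      qed
      have "(\<Sum>i=1..I. if c i = d then real (w i) * (th i - rho d) else 0) \<le> (\<Sum>i=1..I. if c i = d then real (w1 i) * (th i - rho d) else 0)"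
      proof (rule sum_mono)
        fix i assume i: "i \<in> {1..I}"
        show "(if c i = d then real (w i) * (th i - rho d) else 0) \<le> (if c i = d then real (w1 i) * (th i - rho d) else 0)"
        proof (cases "c i = d \<and> bad i")
          case True
          then have "th i * sqrt (cn w c d) \<le> m * sqrt (cT w c d)" unfolding bad_def by auto
          then have "th i * sq \<le> m * tq" unfolding sq_def tq_def .
          then have "th i \<le> rho d" unfolding rhoe using scn by (simp add: pos_le_divide_eq)
          then have "real (w i) * (th i - rho d) \<le> 0" by (simp add: mult_nonneg_nonpos)
          then show ?thesis using True unfolding w1_def by simp
        next
          case False
          then show ?thesis unfolding w1_def by auto
        qed
      qed
      then show ?thesis unfolding e1 .
    qed
    have cn1nn: "cn w1 c d \<ge> 0" by (rule cn_nonneg)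
    have dpos: "U d + cn w1 c d > 0" using Upos cn1nn by linarith
    have ge: "cT w1 c d \<ge> rho d * (U d + cn w1 c d)" using termwise eq1 by (simp add: algebra_simps)
    have r1: "rho1 d = cT w1 c d / (U d + cn w1 c d)" unfolding rho1_def using cnp by simp
    have r1ge: "rho1 d \<ge> rho d" unfolding r1 using ge dpos by (simp add: pos_le_divide_eq)
    have r1pos: "rho1 d > 0" using r1ge rhopos by linarith
    have ct1: "cT w1 c d = rho1 d * (U d + cn w1 c d)" unfolding r1 using dpos by simp
    have A: "cn w1 c d * rho1 d \<le> cT w1 c d" unfolding ct1 using r1pos Upos by (simp add: algebra_simps)
    have B: "cT w1 c d / rho1 d - cn w1 c d = f d / m - cn w c d" unfolding ct1 using r1pos U_def by simp
    have C: "cT w1 c d - cn w1 c d * rho1 d = rho1 d * U d" unfolding ct1 by (simp add: algebra_simps)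
    have "rho d * U d = cT w c d - m * f d" using eq1 rcn by simp
    moreover have "rho1 d * U d \<ge> rho d * U d" using r1ge Upos by (simp add: mult_right_mono)
    ultimately show ?thesis using A B C r1pos by simp
  qed
  have res: "(\<Sum>d=1..J. cT w1 c d / rho1 d - cn w1 c d) \<le> S"
  proof -
    have "(\<Sum>d=1..J. cT w1 c d / rho1 d - cn w1 c d) = (\<Sum>d=1..J. f d / m - cn w c d)"
      by (rule sum.cong) (simp_all add: key)
    also have "\<dots> = Ff w c / m - nt w"
      unfolding Ff_def f_def sum_cn[OF cfg, symmetric] by (simp add: sum_subtractf sum_divide_distrib)
    also have "\<dots> = S" using Feq mpos by simp
    finally show ?thesis by simp
  qed
  have cfg1: "cfg c" using cfg .
  obtain D where D: "D \<subseteq> {1..J}" "cons (restr w1 c D) c"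
    "(\<Sum>d=1..J. cT w1 c d - cn w1 c d * rho1 d) \<le> Vv (restr w1 c D) c"
    using from_priceconfig[OF cfg1, of rho1 w1] key res by blast
  have "Vv w c = (\<Sum>d=1..J. cT w c d - m * f d)"
    unfolding Vv_def m_def Ff_def f_def sum_cT[OF cfg, symmetric] by (simp add: sum_subtractf sum_distrib_left)
  also have "\<dots> \<le> (\<Sum>d=1..J. cT w1 c d - cn w1 c d * rho1 d)"
    by (rule sum_mono) (simp add: key)
  finally have Vle: "Vv w c \<le> Vv (restr w1 c D) c" using D(3) by simp
  have sub: "\<forall>i. restr w1 c D i = 0 \<or> restr w1 c D i = w i" unfolding restr_def w1_def by auto
  have "(\<Sum>i=1..I. restr w1 c D i) \<le> (\<Sum>i=1..I. w1 i)" by (rule sum_mono) (simp add: restr_def)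
  also have "\<dots> < (\<Sum>i=1..I. w i)"
  proof (rule sum_strict_mono_ex1)
    show "finite {1..I}" by simp
    show "\<forall>i\<in>{1..I}. w1 i \<le> w i" by (simp add: w1le)
    have "bad b" unfolding bad_def m_def using b bad_b by simp
    then show "\<exists>i\<in>{1..I}. w1 i < w i" using b unfolding w1_def by auto
  qed
  finally show ?thesis using sub D(2) Vle by blast
qed

end

context ppd begin

lemma minimal_good:
  assumes cfg: "cfg c" and ex: "(\<forall>i. w1 i = 0 \<or> w1 i = w0 i) \<and> cons w1 c \<and> R \<le> Vv w1 c"
  shows "\<exists>w. (\<forall>i. w i = 0 \<or> w i = w0 i) \<and> cons w c \<and> R \<le> Vv w c \<and> good w c"
proof -
  define P where "P w \<longleftrightarrow> (\<forall>i. w i = 0 \<or> w i = w0 i) \<and> cons w c \<and> R \<le> Vv w c" for w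
  obtain w where Pw: "P w" and wmin: "\<forall>y. P y \<longrightarrow> (\<Sum>i=1..I. w i) \<le> (\<Sum>i=1..I. y i)"
    using ex_has_least_nat[of P w1 "\<lambda>w. \<Sum>i=1..I. w i"] ex unfolding P_def by blast
  have consw: "cons w c" using Pw unfolding P_def by blast
  have good: "good w c" unfolding good_def
  proof (intro ballI impI)
    fix i assume i: "i \<in> {1..I}" and wi: "w i > 0"
    have strong: "th i * sqrt (cn w c (c i)) > mu w c * sqrt (cT w c (c i))"
    proof (rule ccontr)
      assume "\<not> ?thesis"
      then have "th i * sqrt (cn w c (c i)) \<le> mu w c * sqrt (cT w c (c i))" by simp
      then obtain w2 where w2: "\<forall>i. w2 i = 0 \<or> w2 i = w i" "cons w2 c" "Vv w c \<le> Vv w2 c"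
        "(\<Sum>i=1..I. w2 i) < (\<Sum>i=1..I. w i)"
        using drop_step[OF cfg consw i wi] by blast
      have "P w2" unfolding P_def using w2 Pw unfolding P_def by (metis order_trans)
      then show False using wmin w2(4) by fastforce
    qed
    have ci: "c i \<in> {1..J}" using cfg i unfolding cfg_def by blast
    have cnp: "cn w c (c i) > 0" using member_cn_pos[of i w c] i wi by simp
    have sc: "sqrt (cT w c (c i)) > mu w c * sqrt (cn w c (c i))" using consw ci cnp unfolding cons_def by blast
    have "mu w c * sqrt (cT w c (c i)) \<ge> mu w c * (mu w c * sqrt (cn w c (c i)))"
      using sc mu_nonneg[of w c] by (simp add: mult_left_mono)
    then have "th i * sqrt (cn w c (c i)) > (mu w c)\<^sup>2 * sqrt (cn w c (c i))"
      using strong by (simp add: power2_eq_square algebra_simps)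
    then show "th i > (mu w c)\<^sup>2" using cnp by (simp add: mult_less_cancel_right_pos)
  qed
  show ?thesis using Pw good unfolding P_def by blast
qed


definition aa :: "(nat \<Rightarrow> nat) \<Rightarrow> (nat \<Rightarrow> nat) \<Rightarrow> nat \<Rightarrow> real" where
  "aa w c d = sqrt (cT w c d / cn w c d)"
definition hh :: "(nat \<Rightarrow> nat) \<Rightarrow> (nat \<Rightarrow> nat) \<Rightarrow> real \<Rightarrow> nat \<Rightarrow> real" where
  "hh w c t d = aa w c d + t / aa w c d"
definition Dn :: "(nat \<Rightarrow> nat) \<Rightarrow> (nat \<Rightarrow> nat) \<Rightarrow> nat set" where
  "Dn w c = {d \<in> {1..J}. cn w c d > 0}"
definition reas :: "(nat \<Rightarrow> nat) \<Rightarrow> (nat \<Rightarrow> nat) \<Rightarrow> nat \<Rightarrow> nat" where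
  "reas w c i = (if i \<in> {1..I} then (if w i > 0 then
     (LEAST d. d \<in> Dn w c \<and> (\<forall>e\<in>Dn w c. hh w c (th i) d \<le> hh w c (th i) e)) else 1) else 0)"

lemma cn_pos_cT_pos: "cn w c d > 0 \<Longrightarrow> cT w c d > 0"
proof -
  assume "cn w c d > 0"
  then obtain i where i: "i \<in> {1..I}" "c i = d" "w i > 0" using cn_pos_member by blast
  have "cT w c d \<ge> (if c i = d then real (w i) * th i else 0)"
    unfolding cT_def by (rule member_le_sum) (use i in \<open>auto simp: wth_nonneg\<close>)
  moreover have "real (w i) * th i > 0" using i th_pos'[OF i(1)] by simp
  ultimately show ?thesis using i by simp
qed

lemma aa_facts: assumes "d \<in> Dn w c"
  shows "aa w c d > 0" "aa w c d * cn w c d = sqrt (cn w c d * cT w c d)" "cT w c d / aa w c d = sqrt (cn w c d * cT w c d)"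
proof -
  have cnp: "cn w c d > 0" using assms unfolding Dn_def by simp
  have ctp: "cT w c d > 0" using cn_pos_cT_pos[OF cnp] .
  define s where "s = sqrt (cn w c d)"
  define t where "t = sqrt (cT w c d)"
  have sp: "s > 0" "t > 0" unfolding s_def t_def using cnp ctp by simp_all
  have cns: "cn w c d = s * s" unfolding s_def using cnp by simp
  have cts: "cT w c d = t * t" unfolding t_def using ctp by simp
  have aae: "aa w c d = t / s" unfolding aa_def s_def t_def by (simp add: real_sqrt_divide)
  have sq: "sqrt (cn w c d * cT w c d) = s * t" unfolding s_def t_def by (simp add: real_sqrt_mult)
  show "aa w c d > 0" unfolding aae using sp by simp
  show "aa w c d * cn w c d = sqrt (cn w c d * cT w c d)" by (simp only: sq) (simp add: aae cns sp field_simps)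
  show "cT w c d / aa w c d = sqrt (cn w c d * cT w c d)" by (simp only: sq) (simp add: aae cts sp field_simps)
qed

lemma amgm: fixes a x y :: real assumes "a > 0" "x \<ge> 0" "y \<ge> 0"
  shows "sqrt (x * y) \<le> (a * x + y / a) / 2"
proof -
  define u where "u = sqrt (a * x)"
  define v where "v = sqrt (y / a)"
  have uv: "u * v = sqrt (x * y)" unfolding u_def v_def using assms by (simp add: real_sqrt_mult[symmetric])
  have u2: "u * u = a * x" unfolding u_def using assms by simp
  have v2: "v * v = y / a" unfolding v_def using assms by simp
  have "(u - v) * (u - v) \<ge> 0" by simp
  then have "2 * (u * v) \<le> u * u + v * v" by (simp add: algebra_simps)
  then show ?thesis unfolding uv u2 v2 by simp
qed

lemma member_in_Dn: "cfg c \<Longrightarrow> i \<in> {1..I} \<Longrightarrow> w i > 0 \<Longrightarrow> c i \<in> Dn w c"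
  unfolding Dn_def cfg_def using member_cn_pos[of i w c] by auto

lemma finite_argmin: fixes f :: "nat \<Rightarrow> real" shows "finite A \<Longrightarrow> A \<noteq> {} \<Longrightarrow> \<exists>a\<in>A. \<forall>b\<in>A. f a \<le> f b"
proof -
  assume A: "finite A" "A \<noteq> {}"
  define m where "m = Min (f ` A)"
  have "m \<in> f ` A" unfolding m_def using A by simp
  then obtain a where a: "a \<in> A" "f a = m" by auto
  have "\<forall>b\<in>A. m \<le> f b" unfolding m_def using A by simp
  then show ?thesis using a by auto
qed

lemma reas_props:
  assumes cfg: "cfg c" and i: "i \<in> {1..I}" "w i > 0"
  shows "reas w c i \<in> Dn w c" "\<forall>e\<in>Dn w c. hh w c (th i) (reas w c i) \<le> hh w c (th i) e"
    "\<And>d. d \<in> Dn w c \<Longrightarrow> (\<forall>e\<in>Dn w c. hh w c (th i) d \<le> hh w c (th i) e) \<Longrightarrow> reas w c i \<le> d"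
proof -
  define Q where "Q d \<longleftrightarrow> d \<in> Dn w c \<and> (\<forall>e\<in>Dn w c. hh w c (th i) d \<le> hh w c (th i) e)" for d
  have re: "reas w c i = (LEAST d. Q d)" unfolding reas_def Q_def using i by simp
  have fin: "finite (Dn w c)" unfolding Dn_def by simp
  have ne: "Dn w c \<noteq> {}" using member_in_Dn[of c i w] cfg i by blast
  obtain d0 where "d0 \<in> Dn w c" "\<forall>e\<in>Dn w c. hh w c (th i) d0 \<le> hh w c (th i) e"
    using finite_argmin[OF fin ne, of "hh w c (th i)"] by blast
  then have "Q d0" unfolding Q_def by blast
  then have "Q (LEAST d. Q d)" by (rule LeastI)
  then show "reas w c i \<in> Dn w c" "\<forall>e\<in>Dn w c. hh w c (th i) (reas w c i) \<le> hh w c (th i) e"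
    unfolding re Q_def by blast+
  fix d assume "d \<in> Dn w c" "\<forall>e\<in>Dn w c. hh w c (th i) d \<le> hh w c (th i) e"
  then have "Q d" unfolding Q_def by blast
  then show "reas w c i \<le> d" unfolding re by (rule Least_le)
qed


lemma reas_min: "cfg c \<Longrightarrow> i \<in> {1..I} \<Longrightarrow> w i > 0 \<Longrightarrow> e \<in> Dn w c \<Longrightarrow> hh w c (th i) (reas w c i) \<le> hh w c (th i) e"
  using reas_props(2) by blast
lemma reas_least: "cfg c \<Longrightarrow> i \<in> {1..I} \<Longrightarrow> w i > 0 \<Longrightarrow> d \<in> Dn w c \<Longrightarrow> (\<forall>e\<in>Dn w c. hh w c (th i) d \<le> hh w c (th i) e) \<Longrightarrow> reas w c i \<le> d"
  using reas_props(3) by blast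

lemma hcmp_diff: fixes x y t :: real assumes "x > 0" "y > 0"
  shows "x + t / x - (y + t / y) = (x - y) * (x * y - t) / (x * y)"
  using assms by (simp add: field_simps)

lemma hcmp_strict: fixes x y t :: real assumes "x > y" "y > 0"
  shows "x + t / x < y + t / y \<longleftrightarrow> x * y < t"
proof -
  have xp: "x > 0" using assms by simp
  have xy: "x * y > 0" using assms xp by simp
  have d: "x - y > 0" using assms by simp
  have "x + t / x < y + t / y \<longleftrightarrow> (x - y) * (x * y - t) / (x * y) < 0"
    using hcmp_diff[OF xp assms(2), of t] by linarith
  also have "\<dots> \<longleftrightarrow> (x - y) * (x * y - t) < 0" using xy by (simp add: divide_less_0_iff)
  also have "\<dots> \<longleftrightarrow> x * y - t < 0" using d by (simp add: mult_less_0_iff)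
  finally show ?thesis by simp
qed

lemma hcmp_le: fixes x y t :: real assumes "x > y" "y > 0"
  shows "x + t / x \<le> y + t / y \<longleftrightarrow> x * y \<le> t"
proof -
  have xp: "x > 0" using assms by simp
  have xy: "x * y > 0" using assms xp by simp
  have d: "x - y > 0" using assms by simp
  have "x + t / x \<le> y + t / y \<longleftrightarrow> (x - y) * (x * y - t) / (x * y) \<le> 0"
    using hcmp_diff[OF xp assms(2), of t] by linarith
  also have "\<dots> \<longleftrightarrow> (x - y) * (x * y - t) \<le> 0" using xy by (simp add: divide_le_0_iff)
  also have "\<dots> \<longleftrightarrow> x * y - t \<le> 0" using d by (simp add: mult_le_0_iff)
  finally show ?thesis by simp
qed

lemma Gform:
  assumes mem: "\<forall>i\<in>{1..I}. w i > 0 \<longrightarrow> c' i \<in> Dn w c"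
  shows "(\<Sum>d\<in>Dn w c. (aa w c d * cn w c' d + cT w c' d / aa w c d) / 2)
     = (\<Sum>i=1..I. real (w i) * hh w c (th i) (c' i) / 2)"
proof -
  have fin: "finite (Dn w c)" unfolding Dn_def by simp
  have "(\<Sum>d\<in>Dn w c. (aa w c d * cn w c' d + cT w c' d / aa w c d) / 2)
    = (\<Sum>d\<in>Dn w c. \<Sum>i=1..I. if c' i = d then real (w i) * hh w c (th i) d / 2 else 0)"
  proof (rule sum.cong[OF refl])
    fix d assume "d \<in> Dn w c"
    have "aa w c d * cn w c' d + cT w c' d / aa w c d
      = (\<Sum>i=1..I. aa w c d * (if c' i = d then real (w i) else 0) + (if c' i = d then real (w i) * th i else 0) / aa w c d)"
      unfolding cn_def cT_def by (simp add: sum_distrib_left sum_divide_distrib sum.distrib)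
    then have "(aa w c d * cn w c' d + cT w c' d / aa w c d) / 2
      = (\<Sum>i=1..I. (aa w c d * (if c' i = d then real (w i) else 0) + (if c' i = d then real (w i) * th i else 0) / aa w c d) / 2)"
      by (simp add: sum_divide_distrib)
    also have "\<dots> = (\<Sum>i=1..I. if c' i = d then real (w i) * hh w c (th i) d / 2 else 0)"
      by (rule sum.cong) (auto simp: hh_def algebra_simps)
    finally show "(aa w c d * cn w c' d + cT w c' d / aa w c d) / 2 = (\<Sum>i=1..I. if c' i = d then real (w i) * hh w c (th i) d / 2 else 0)" .
  qed
  also have "\<dots> = (\<Sum>i=1..I. if c' i \<in> Dn w c then real (w i) * hh w c (th i) (c' i) / 2 else 0)"
    by (rule sum_group) (simp_all add: fin)
  also have "\<dots> = (\<Sum>i=1..I. real (w i) * hh w c (th i) (c' i) / 2)"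
    by (rule sum.cong) (use mem in auto)
  finally show ?thesis .
qed

lemma Ff_le_G:
  assumes mem: "\<forall>i\<in>{1..I}. w i > 0 \<longrightarrow> c' i \<in> Dn w c"
  shows "Ff w c' \<le> (\<Sum>d\<in>Dn w c. (aa w c d * cn w c' d + cT w c' d / aa w c d) / 2)"
proof -
  have sub: "Dn w c \<subseteq> {1..J}" unfolding Dn_def by auto
  have z: "cn w c' d = 0" if "d \<in> {1..J} - Dn w c" for d
    unfolding cn_def by (rule sum.neutral) (use mem that in auto)
  have "Ff w c' = (\<Sum>d\<in>Dn w c. sqrt (cn w c' d * cT w c' d))"
    unfolding Ff_def by (rule sum.mono_neutral_right) (use sub z in auto)
  also have "\<dots> \<le> (\<Sum>d\<in>Dn w c. (aa w c d * cn w c' d + cT w c' d / aa w c d) / 2)"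
    by (rule sum_mono) (use aa_facts(1) amgm cn_nonneg cT_nonneg in blast)
  finally show ?thesis .
qed

lemma Ff_eq_G:
  shows "Ff w c = (\<Sum>d\<in>Dn w c. (aa w c d * cn w c d + cT w c d / aa w c d) / 2)"
proof -
  have sub: "Dn w c \<subseteq> {1..J}" unfolding Dn_def by auto
  have z: "cn w c d = 0" if "d \<in> {1..J} - Dn w c" for d
    using that cn_nonneg[of w c d] unfolding Dn_def by auto
  have "Ff w c = (\<Sum>d\<in>Dn w c. sqrt (cn w c d * cT w c d))"
    unfolding Ff_def by (rule sum.mono_neutral_right) (use sub z in auto)
  also have "\<dots> = (\<Sum>d\<in>Dn w c. (aa w c d * cn w c d + cT w c d / aa w c d) / 2)"
    by (rule sum.cong) (simp_all add: aa_facts)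
  finally show ?thesis .
qed

lemma reassign:
  assumes cfg: "cfg c" and good: "good w c"
  shows "cfg (reas w c) \<and> good w (reas w c) \<and> mono w (reas w c) \<and> Vv w c \<le> Vv w (reas w c)"
proof -
  let ?r = "reas w c"
  have memr: "\<forall>i\<in>{1..I}. w i > 0 \<longrightarrow> ?r i \<in> Dn w c" using reas_props(1) cfg by blast
  have memc: "\<forall>i\<in>{1..I}. w i > 0 \<longrightarrow> c i \<in> Dn w c" using member_in_Dn cfg by blast
  have cfgr: "cfg ?r" unfolding cfg_def
  proof
    fix i assume i: "i \<in> {1..I}"
    show "?r i \<in> {1..J}"
    proof (cases "w i > 0")
      case True then show ?thesis using memr i unfolding Dn_def by auto
    next
      case False then show ?thesis using i J_ge unfolding reas_def by auto
    qed
  qed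
  have GG: "(\<Sum>i=1..I. real (w i) * hh w c (th i) (?r i) / 2) \<le> (\<Sum>i=1..I. real (w i) * hh w c (th i) (c i) / 2)"
  proof (rule sum_mono)
    fix i assume i: "i \<in> {1..I}"
    show "real (w i) * hh w c (th i) (?r i) / 2 \<le> real (w i) * hh w c (th i) (c i) / 2"
    proof (cases "w i > 0")
      case True
      have "hh w c (th i) (?r i) \<le> hh w c (th i) (c i)" using reas_min[of c i w "c i"] cfg memc i True by blast
      then show ?thesis by (simp add: mult_left_mono)
    next
      case False then show ?thesis by simp
    qed
  qed
  have Fle: "Ff w ?r \<le> Ff w c"
    using Ff_le_G[OF memr] Gform[OF memr] GG Gform[OF memc] Ff_eq_G[of w c] by linarith
  have den: "S + nt w > 0" using S_pos nt_nonneg[of w] by linarith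
  have Fsq: "(Ff w ?r)\<^sup>2 \<le> (Ff w c)\<^sup>2" using Fle Ff_nonneg[of w ?r] by (simp add: power_mono)
  have V: "Vv w c \<le> Vv w ?r"
  proof -
    have e: "Vv w c' = Tt w - (Ff w c')\<^sup>2 / (S + nt w)" for c' unfolding Vv_def mu_def by (simp add: power2_eq_square)
    show ?thesis unfolding e using Fsq den by (simp add: divide_right_mono)
  qed
  have mule: "mu w ?r \<le> mu w c" unfolding mu_def using Fle den by (simp add: divide_right_mono)
  have goodr: "good w ?r" unfolding good_def
  proof (intro ballI impI)
    fix i assume "i \<in> {1..I}" "w i > 0"
    then have "th i > (mu w c)\<^sup>2" using good unfolding good_def by blast
    moreover have "(mu w ?r)\<^sup>2 \<le> (mu w c)\<^sup>2" using mule mu_nonneg[of w ?r] by (simp add: power_mono)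
    ultimately show "th i > (mu w ?r)\<^sup>2" by linarith
  qed
  have monor: "mono w ?r" unfolding mono_def
  proof (intro ballI impI)
    fix i g k assume i: "i \<in> {1..I}" and g: "g \<in> {1..I}" and k: "k \<in> {1..I}"
      and H: "i < g \<and> g < k \<and> 0 < w i \<and> 0 < w g \<and> 0 < w k \<and> ?r i = ?r k"
    from H have H1: "i < g" "g < k" "0 < w i" "0 < w g" "0 < w k" "?r i = ?r k" by auto
    define v where "v = ?r i"
    define u where "u = ?r g"
    have vD: "v \<in> Dn w c" unfolding v_def using memr i H1 by blast
    have uD: "u \<in> Dn w c" unfolding u_def using memr g H1 by blast
    have vk: "?r k = v" unfolding v_def using H1 by simp
    have av: "aa w c v > 0" using aa_facts(1)[OF vD] .
    have au: "aa w c u > 0" using aa_facts(1)[OF uD] .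
    have Hi: "hh w c (th i) v \<le> hh w c (th i) u" using reas_min[of c i w u] cfg i H1 uD unfolding v_def by blast
    have Hk: "hh w c (th k) v \<le> hh w c (th k) u" using reas_min[of c k w u] cfg k H1 uD vk by simp
    have Hg: "hh w c (th g) u \<le> hh w c (th g) v" using reas_min[of c g w v] cfg g H1 vD unfolding u_def by blast
    have tig: "th g < th i" using th_dec i g H1 by blast
    have tgk: "th k < th g" using th_dec g k H1 by blast
    have aeq: "aa w c u = aa w c v"
    proof (rule ccontr)
      assume ne: "aa w c u \<noteq> aa w c v"
      show False
      proof (cases "aa w c u > aa w c v")
        case True
        have "aa w c u * aa w c v \<le> th g" using Hg hcmp_le[OF True av, of "th g"] unfolding hh_def by simp
        then have "aa w c u * aa w c v < th i" using tig by linarith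
        then have "hh w c (th i) u < hh w c (th i) v" using hcmp_strict[OF True av, of "th i"] unfolding hh_def by simp
        then show False using Hi by simp
      next
        case False
        then have lt: "aa w c v > aa w c u" using ne by simp
        have "aa w c v * aa w c u \<le> th k" using Hk hcmp_le[OF lt au, of "th k"] unfolding hh_def by simp
        then have "aa w c v * aa w c u < th g" using tgk by linarith
        then have "hh w c (th g) v < hh w c (th g) u" using hcmp_strict[OF lt au, of "th g"] unfolding hh_def by simp
        then show False using Hg by simp
      qed
    qed
    have heq: "hh w c t u = hh w c t v" for t unfolding hh_def aeq ..
    have "v \<le> u"
    proof -
      have "\<forall>e\<in>Dn w c. hh w c (th i) u \<le> hh w c (th i) e" using reas_min[of c i w] cfg i H1 heq unfolding v_def by metis
      then show ?thesis using reas_least[of c i w u] cfg i H1 uD unfolding v_def by blast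
    qed
    moreover have "u \<le> v"
    proof -
      have "\<forall>e\<in>Dn w c. hh w c (th g) v \<le> hh w c (th g) e" using reas_min[of c g w] cfg g H1 heq unfolding u_def by metis
      then show ?thesis using reas_least[of c g w v] cfg g H1 vD unfolding u_def by blast
    qed
    ultimately show "?r g = ?r i" unfolding u_def v_def by simp
  qed
  show ?thesis using cfgr goodr monor V by blast
qed

end

context ppd begin

definition pv :: "(nat \<Rightarrow> real) \<Rightarrow> real \<Rightarrow> nat \<Rightarrow> nat \<Rightarrow> real" where
  "pv wh U l m = (\<Sum>i=l..m. wh i * th i) / (U + (\<Sum>i=l..m. wh i))"

lemma th_mono_le: "i \<in> {1..I} \<Longrightarrow> k \<in> {1..I} \<Longrightarrow> i \<le> k \<Longrightarrow> th k \<le> th i"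
  using th_dec by (cases "i = k") (auto intro: less_imp_le)

lemma sum_pos_on_nonneg: fixes f :: "nat \<Rightarrow> real" shows "\<forall>i\<in>A. f i > 0 \<Longrightarrow> B \<subseteq> A \<Longrightarrow> (\<Sum>i\<in>B. f i) \<ge> 0"
  by (rule sum_nonneg) (auto intro: less_imp_le)

lemma finite_argmax: fixes f :: "nat \<Rightarrow> real" shows "finite A \<Longrightarrow> A \<noteq> {} \<Longrightarrow> \<exists>a\<in>A. \<forall>b\<in>A. f b \<le> f a"
proof -
  assume A: "finite A" "A \<noteq> {}"
  define m where "m = Max (f ` A)"
  have "m \<in> f ` A" unfolding m_def using A by simp
  then obtain a where a: "a \<in> A" "f a = m" by auto
  have "\<forall>b\<in>A. f b \<le> m" unfolding m_def using A by simp
  then show ?thesis using a by auto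
qed

lemma pv_remove:
  assumes U: "U > 0" and whp: "\<forall>i\<in>{l..Suc m}. wh i > 0" and lm: "l \<le> m"
    and le: "th (Suc m) \<le> pv wh U l (Suc m)"
  shows "pv wh U l (Suc m) \<le> pv wh U l m"
proof -
  define t where "t = (\<Sum>i=l..m. wh i * th i)"
  define n where "n = (\<Sum>i=l..m. wh i)"
  define x where "x = wh (Suc m)"
  define y where "y = th (Suc m)"
  have nn: "n \<ge> 0" unfolding n_def by (rule sum_pos_on_nonneg[OF whp]) auto
  have xp: "x > 0" unfolding x_def using whp lm by auto
  have e1: "pv wh U l (Suc m) = (t + x * y) / (U + (n + x))" unfolding pv_def t_def n_def x_def y_def
    using lm by (simp add: sum.cl_ivl_Suc)
  have e2: "pv wh U l m = t / (U + n)" unfolding pv_def t_def n_def ..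
  define p where "p = (t + x * y) / (U + (n + x))"
  have d1: "U + (n + x) > 0" using U nn xp by linarith
  have d2: "U + n > 0" using U nn by linarith
  have tp: "t + x * y = p * (U + (n + x))" unfolding p_def using d1 by simp
  have yp: "y \<le> p" using le unfolding e1 p_def y_def .
  have "t = p * (U + n) + x * (p - y)" using tp by (simp add: algebra_simps)
  then have "t \<ge> p * (U + n)" using yp xp by (simp add: mult_nonneg_nonneg)
  then have "p \<le> t / (U + n)" using d2 by (simp add: pos_le_divide_eq)
  then show ?thesis unfolding e1 e2 p_def .
qed

lemma hull_prefix:
  assumes U: "U > 0" and lr: "l \<le> r" "1 \<le> l" "r \<le> I" and whp: "\<forall>i\<in>{l..r}. wh i > 0"
    and K: "K \<subseteq> {l..r}" "l \<in> K"
  shows "\<exists>m\<in>{l..r}. (\<Sum>i\<in>K. wh i * th i) / (U + (\<Sum>i\<in>K. wh i)) \<le> pv wh U l m \<and> (\<forall>i\<in>{l..m}. pv wh U l m \<le> th i)"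
proof -
  have finK: "finite K" using K finite_subset by blast
  define tK where "tK = (\<Sum>i\<in>K. wh i * th i)"
  define nK where "nK = (\<Sum>i\<in>K. wh i)"
  define rho where "rho = tK / (U + nK)"
  have nKnn: "nK \<ge> 0" unfolding nK_def by (rule sum_pos_on_nonneg[OF whp K(1)])
  have den: "U + nK > 0" using U nKnn by linarith
  have thl: "th i \<le> th l" if "i \<in> K" for i using th_mono_le[of l i] that K lr by auto
  have "tK \<le> (\<Sum>i\<in>K. wh i * th l)" unfolding tK_def
    by (rule sum_mono) (use thl whp K in \<open>auto intro: mult_left_mono less_imp_le\<close>)
  also have "\<dots> = th l * nK" unfolding nK_def by (simp add: sum_distrib_left mult.commute)
  finally have tKle: "tK \<le> th l * nK" .
  have thlp: "th l > 0" using th_pos' lr by auto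
  have "rho * (U + nK) = tK" unfolding rho_def using den by simp
  then have rho_lt: "rho < th l" using tKle thlp U den
    by (smt (verit, ccfv_SIG) mult_less_cancel_left_pos mult.commute)
  define P0 where "P0 = {i \<in> {l..r}. rho \<le> th i}"
  have lP0: "l \<in> P0" unfolding P0_def using lr rho_lt by simp
  have finP0: "finite P0" unfolding P0_def by simp
  define m0 where "m0 = Max P0"
  have m0P: "m0 \<in> P0" unfolding m0_def using finP0 lP0 by (intro Max_in) auto
  have m0r: "m0 \<in> {l..r}" using m0P unfolding P0_def by simp
  have down: "rho \<le> th i" if "i \<in> {l..m0}" for i
  proof -
    have "th m0 \<le> th i" using th_mono_le[of i m0] that m0r lr by auto
    moreover have "rho \<le> th m0" using m0P unfolding P0_def by simp
    ultimately show ?thesis by simp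
  qed
  have above: "th i < rho" if "i \<in> K" "i \<notin> {l..m0}" for i
  proof -
    have i: "i \<in> {l..r}" using that K by auto
    have "i > m0" using that i by auto
    then have "i \<notin> P0" using Max_ge[OF finP0] unfolding m0_def by (meson not_le)
    then show ?thesis unfolding P0_def using i by auto
  qed
  define g where "g i = wh i * (th i - rho)" for i
  have "(\<Sum>i\<in>K. g i) = (\<Sum>i\<in>K \<inter> {l..m0}. g i) + (\<Sum>i\<in>K - {l..m0}. g i)"
    using finK by (simp add: sum.Int_Diff)
  also have "(\<Sum>i\<in>K - {l..m0}. g i) \<le> 0"
  proof (rule sum_nonpos)
    fix i assume i: "i \<in> K - {l..m0}"
    then have "th i < rho" using above by blast
    moreover have "wh i > 0" using whp K i by auto
    ultimately show "g i \<le> 0" unfolding g_def by (simp add: mult_nonneg_nonpos)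
  qed
  also have "(\<Sum>i\<in>K \<inter> {l..m0}. g i) \<le> (\<Sum>i\<in>{l..m0}. g i)"
  proof (rule sum_mono2)
    fix i assume i: "i \<in> {l..m0} - K \<inter> {l..m0}"
    then have "rho \<le> th i" using down by blast
    moreover have "wh i > 0" using whp m0r i by auto
    ultimately show "0 \<le> g i" unfolding g_def by simp
  qed auto
  finally have sg: "(\<Sum>i\<in>K. g i) \<le> (\<Sum>i\<in>{l..m0}. g i)" by simp
  have "(\<Sum>i\<in>K. g i) = tK - rho * nK" unfolding g_def tK_def nK_def
    by (simp add: algebra_simps sum_subtractf sum_distrib_left)
  also have "\<dots> = rho * U" using \<open>rho * (U + nK) = tK\<close> by (simp add: algebra_simps)
  finally have gK: "(\<Sum>i\<in>K. g i) = rho * U" .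
  have gm0: "(\<Sum>i\<in>{l..m0}. g i) = (\<Sum>i=l..m0. wh i * th i) - rho * (\<Sum>i=l..m0. wh i)"
    unfolding g_def by (simp add: algebra_simps sum_subtractf sum_distrib_left)
  have n0nn: "(\<Sum>i=l..m0. wh i) \<ge> 0" by (rule sum_pos_on_nonneg[OF whp]) (use m0r in auto)
  have "rho * (U + (\<Sum>i=l..m0. wh i)) \<le> (\<Sum>i=l..m0. wh i * th i)"
    using sg gK gm0 by (simp add: algebra_simps)
  then have pv0: "rho \<le> pv wh U l m0" unfolding pv_def using U n0nn
    by (simp add: pos_le_divide_eq add_pos_nonneg)
  have finlr: "finite {l..r}" and nelr: "{l..r} \<noteq> {}" using lr by auto
  define Q where "Q m \<longleftrightarrow> m \<in> {l..r} \<and> (\<forall>m'\<in>{l..r}. pv wh U l m' \<le> pv wh U l m)" for m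
  obtain ma where "ma \<in> {l..r}" "\<forall>m'\<in>{l..r}. pv wh U l m' \<le> pv wh U l ma"
    using finite_argmax[OF finlr nelr, of "pv wh U l"] by blast
  then have "Q ma" unfolding Q_def by blast
  define ms where "ms = (LEAST m. Q m)"
  have Qms: "Q ms" unfolding ms_def using \<open>Q ma\<close> by (rule LeastI)
  have msl: "\<And>m. Q m \<Longrightarrow> ms \<le> m" unfolding ms_def by (rule Least_le)
  have msr: "ms \<in> {l..r}" using Qms unfolding Q_def by blast
  have ge0: "pv wh U l m0 \<le> pv wh U l ms" using Qms m0r unfolding Q_def by blast
  have valid: "\<forall>i\<in>{l..ms}. pv wh U l ms \<le> th i"
  proof (rule ccontr)
    assume "\<not> ?thesis"
    then obtain i where i: "i \<in> {l..ms}" "th i < pv wh U l ms" by auto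
    have "th ms \<le> th i" using th_mono_le[of i ms] i msr lr by auto
    then have thms: "th ms < pv wh U l ms" using i by simp
    show False
    proof (cases "ms = l")
      case True
      have "pv wh U l l = wh l * th l / (U + wh l)" unfolding pv_def by simp
      also have "\<dots> < th l"
      proof -
        have wl: "wh l > 0" using whp lr by auto
        have "wh l * th l < th l * (U + wh l)" using U thlp by (simp add: algebra_simps)
        then show ?thesis using U wl by (simp add: divide_less_eq add_pos_pos)
      qed
      finally show False using thms True by simp
    next
      case False
      then obtain m' where m': "ms = Suc m'" "l \<le> m'" using msr
        by (metis atLeastAtMost_iff le_antisym not_less_eq_eq Suc_pred' gr0I le_zero_eq not_less)
      have whp': "\<forall>i\<in>{l..Suc m'}. wh i > 0" using whp msr m' by auto
      have "pv wh U l (Suc m') \<le> pv wh U l m'"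
        using pv_remove[OF U whp' m'(2)] thms m' by simp
      then have "Q m'" using Qms m' msr unfolding Q_def by force
      then have "ms \<le> m'" by (rule msl)
      then show False using m' by simp
    qed
  qed
  show ?thesis using msr ge0 pv0 valid unfolding rho_def tK_def nK_def by (intro bexI[of _ ms]) auto
qed

end

context ppd begin

definition Kd :: "(nat \<Rightarrow> nat) \<Rightarrow> (nat \<Rightarrow> nat) \<Rightarrow> nat \<Rightarrow> nat set" where
  "Kd w c d = {i \<in> {1..I}. w i > 0 \<and> c i = d}"

lemma cT_Kd: "cT w c d = (\<Sum>i\<in>Kd w c d. real (w i) * th i)"
proof -
  have "(\<Sum>i\<in>Kd w c d. real (w i) * th i) = (\<Sum>i=1..I. if w i > 0 \<and> c i = d then real (w i) * th i else 0)"
    unfolding Kd_def by (rule sum.inter_filter) simp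
  also have "\<dots> = cT w c d" unfolding cT_def by (rule sum.cong) auto
  finally show ?thesis by simp
qed

lemma cn_Kd: "cn w c d = (\<Sum>i\<in>Kd w c d. real (w i))"
proof -
  have "(\<Sum>i\<in>Kd w c d. real (w i)) = (\<Sum>i=1..I. if w i > 0 \<and> c i = d then real (w i) else 0)"
    unfolding Kd_def by (rule sum.inter_filter) simp
  also have "\<dots> = cn w c d" unfolding cn_def by (rule sum.cong) auto
  finally show ?thesis by simp
qed

lemma Kd_ne: "d \<in> Dn w c \<Longrightarrow> Kd w c d \<noteq> {}"
  unfolding Dn_def Kd_def using cn_pos_member by fastforce

lemma Kd_fin: "finite (Kd w c d)" unfolding Kd_def by simp

lemma sum_over_Dn:
  assumes "\<forall>d\<in>{1..J}. d \<notin> Dn w c \<longrightarrow> g d = 0"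
  shows "(\<Sum>d=1..J. g d) = (\<Sum>d\<in>Dn w c. g d)"
  by (rule sum.mono_neutral_right) (use assms in \<open>auto simp: Dn_def\<close>)

lemma good_cT_gt: assumes good: "good w c" and d: "d \<in> Dn w c"
  shows "cT w c d > (mu w c)\<^sup>2 * cn w c d"
proof -
  have "(\<Sum>i\<in>Kd w c d. real (w i) * (mu w c)\<^sup>2) < (\<Sum>i\<in>Kd w c d. real (w i) * th i)"
  proof (rule sum_strict_mono)
    show "finite (Kd w c d)" by (rule Kd_fin)
    show "Kd w c d \<noteq> {}" using Kd_ne[OF d] .
    fix i assume "i \<in> Kd w c d"
    then have "i \<in> {1..I}" "w i > 0" unfolding Kd_def by auto
    then have "th i > (mu w c)\<^sup>2" using good unfolding good_def by blast
    then show "real (w i) * (mu w c)\<^sup>2 < real (w i) * th i" using \<open>w i > 0\<close> by simp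
  qed
  then show ?thesis unfolding cT_Kd cn_Kd by (simp add: sum_distrib_right algebra_simps)
qed

lemma hull_disjoint:
  assumes mono: "mono w c" and d: "d \<in> Dn w c" and e: "e \<in> Dn w c" and de: "d \<noteq> e"
  shows "{Min (Kd w c d)..Max (Kd w c d)} \<inter> {Min (Kd w c e)..Max (Kd w c e)} = {}"
proof -
  have gen: "{Min (Kd w c d)..Max (Kd w c d)} \<inter> {Min (Kd w c e)..Max (Kd w c e)} = {}"
    if d: "d \<in> Dn w c" and e: "e \<in> Dn w c" and de: "d \<noteq> e" and le: "Min (Kd w c d) \<le> Min (Kd w c e)" for d e
  proof (rule ccontr)
    assume "\<not> ?thesis"
    then obtain x where x: "x \<in> {Min (Kd w c d)..Max (Kd w c d)}" "x \<in> {Min (Kd w c e)..Max (Kd w c e)}" by blast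
    define l1 where "l1 = Min (Kd w c d)"
    define r1 where "r1 = Max (Kd w c d)"
    define l2 where "l2 = Min (Kd w c e)"
    have l1K: "l1 \<in> Kd w c d" unfolding l1_def using Kd_ne[OF d] Kd_fin by (intro Min_in) auto
    have r1K: "r1 \<in> Kd w c d" unfolding r1_def using Kd_ne[OF d] Kd_fin by (intro Max_in) auto
    have l2K: "l2 \<in> Kd w c e" unfolding l2_def using Kd_ne[OF e] Kd_fin by (intro Min_in) auto
    have ll: "l1 \<le> l2" using le unfolding l1_def l2_def .
    have l2r1: "l2 \<le> r1" using x unfolding l2_def r1_def by auto
    show False
    proof (cases "l1 = l2")
      case True then show False using l1K l2K de unfolding Kd_def by auto
    next
      case False
      note ne1 = False
      show False
      proof (cases "l2 = r1")
        case True then show False using r1K l2K de unfolding Kd_def by auto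
      next
        case False
        have "c l2 = c l1" using mono l1K r1K l2K ne1 False ll l2r1 unfolding mono_def Kd_def
          by (metis (mono_tags, lifting) le_neq_implies_less mem_Collect_eq)
        then show False using l1K l2K de unfolding Kd_def by auto
      qed
    qed
  qed
  show ?thesis
  proof (cases "Min (Kd w c d) \<le> Min (Kd w c e)")
    case True then show ?thesis using gen[OF d e de] by blast
  next
    case False then show ?thesis using gen[OF e d de[symmetric]] by auto
  qed
qed


lemma interval_set:
  assumes ab: "1 \<le> a" "b \<le> I"
  shows "{i \<in> {a..b}. th i > q} = {} \<or> (\<exists>l m. {i \<in> {a..b}. th i > q} = {l..m})"
proof (cases "{i \<in> {a..b}. th i > q} = {}")
  case True then show ?thesis by blast
next
  case False
  define X where "X = {i \<in> {a..b}. th i > q}"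
  have fin: "finite X" unfolding X_def by simp
  have ne: "X \<noteq> {}" using False unfolding X_def .
  define mx where "mx = Max X"
  have mxX: "mx \<in> X" unfolding mx_def using fin ne by (rule Max_in)
  have aX: "a \<in> X"
  proof -
    obtain i where i: "i \<in> X" using ne by blast
    then have "a \<le> i" "i \<le> b" "th i > q" unfolding X_def by auto
    moreover have "th i \<le> th a" using th_mono_le[of a i] ab \<open>a \<le> i\<close> \<open>i \<le> b\<close> by auto
    ultimately show ?thesis unfolding X_def by auto
  qed
  have "X = {a..mx}"
  proof
    show "X \<subseteq> {a..mx}" unfolding mx_def using fin by (auto simp: X_def)
    show "{a..mx} \<subseteq> X"
    proof
      fix i assume i: "i \<in> {a..mx}"
      have mxb: "mx \<le> b" "th mx > q" using mxX unfolding X_def by auto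
      have "th mx \<le> th i" using th_mono_le[of i mx] i ab mxb by auto
      then show "i \<in> X" unfolding X_def using i mxb by auto
    qed
  qed
  then show ?thesis unfolding X_def by blast
qed

lemma realize:
  assumes cfg: "cfg c" and good: "good w c" and mono: "mono w c" and wN: "\<forall>i\<in>{1..I}. w i \<le> N i"
    and mem: "i0 \<in> {1..I}" "w i0 > 0"
  shows "\<exists>p a n. ppd_feasible S I J N th p a n \<and> Vv w c \<le> ppd_revenue I J th p a n \<and>
     (\<forall>j\<in>{1..J}. cluster I J th p a n j = {} \<or> (\<exists>l m. cluster I J th p a n j = {l..m}))"
proof -
  let ?D = "Dn w c"
  define m where "m = mu w c"
  have Fpos: "Ff w c > 0" using Ff_pos_member[of i0 w c] mem cfg by simp
  have den: "S + nt w > 0" using S_pos nt_nonneg[of w] by linarith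
  have mpos: "m > 0" unfolding m_def mu_def using Fpos den by simp
  have Feq: "Ff w c = m * (S + nt w)" unfolding m_def mu_def using den by simp
  define f where "f d = sqrt (cn w c d * cT w c d)" for d
  define U where "U d = f d / m - cn w c d" for d
  define ll where "ll d = Min (Kd w c d)" for d
  define rr where "rr d = Max (Kd w c d)" for d
  define wh where "wh i = real (if w i > 0 then w i else N i)" for i
  have whp: "\<forall>i\<in>{1..I}. wh i > 0" unfolding wh_def using N_pos by auto
  have Dsub: "?D \<subseteq> {1..J}" unfolding Dn_def by auto
  have finD: "finite ?D" using Dsub finite_subset by blast
  have dK: "ll d \<in> Kd w c d" "rr d \<in> Kd w c d" "Kd w c d \<subseteq> {ll d..rr d}" if d: "d \<in> ?D" for d
  proof -
    show "ll d \<in> Kd w c d" unfolding ll_def using Kd_ne[OF d] Kd_fin by (intro Min_in) auto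
    show "rr d \<in> Kd w c d" unfolding rr_def using Kd_ne[OF d] Kd_fin by (intro Max_in) auto
    show "Kd w c d \<subseteq> {ll d..rr d}" unfolding ll_def rr_def using Kd_fin by auto
  qed
  have dI: "1 \<le> ll d" "rr d \<le> I" "ll d \<le> rr d" if d: "d \<in> ?D" for d
    using dK[OF d] unfolding Kd_def by auto
  have cnp: "cn w c d > 0" if "d \<in> ?D" for d using that unfolding Dn_def by simp
  have fsq: "f d * f d = cn w c d * cT w c d" for d unfolding f_def using cn_nonneg cT_nonneg by simp
  have Upos: "U d > 0" if d: "d \<in> ?D" for d
  proof -
    have gt: "cT w c d > m\<^sup>2 * cn w c d" using good_cT_gt[OF good d] unfolding m_def .
    have "(m * cn w c d)\<^sup>2 < cn w c d * cT w c d"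
      using gt cnp[OF d] by (simp add: power2_eq_square algebra_simps)
    then have "sqrt ((m * cn w c d)\<^sup>2) < f d" unfolding f_def by (rule real_sqrt_less_mono)
    then have "m * cn w c d < f d" using mpos cnp[OF d] by simp
    then show ?thesis unfolding U_def using mpos by (simp add: field_simps)
  qed
  have fpos: "f d > 0" if d: "d \<in> ?D" for d
    unfolding f_def using cnp[OF d] cn_pos_cT_pos[OF cnp[OF d]] by simp
  have rhoU: "cT w c d / (U d + cn w c d) * U d = cT w c d - m * f d" if d: "d \<in> ?D" for d
  proof -
    have e: "U d + cn w c d = f d / m" unfolding U_def by simp
    have "cT w c d / (f d / m) * U d = cT w c d - m * f d"
      unfolding U_def using fpos[OF d] mpos fsq[of d] by (simp add: field_simps)
    then show ?thesis unfolding e .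
  qed
  have sumK: "(\<Sum>i\<in>Kd w c d. wh i * th i) = cT w c d" "(\<Sum>i\<in>Kd w c d. wh i) = cn w c d" for d
    unfolding cT_Kd cn_Kd by (auto intro!: sum.cong simp: wh_def Kd_def)
  have hull: "\<exists>mm\<in>{ll d..rr d}. cT w c d / (U d + cn w c d) \<le> pv wh (U d) (ll d) mm \<and> (\<forall>i\<in>{ll d..mm}. pv wh (U d) (ll d) mm \<le> th i)"
    if d: "d \<in> ?D" for d
  proof -
    have whp': "\<forall>i\<in>{ll d..rr d}. wh i > 0" using whp dI[OF d] by auto
    show ?thesis using hull_prefix[OF Upos[OF d] dI(3)[OF d] dI(1)[OF d] dI(2)[OF d] whp' dK(3)[OF d] dK(1)[OF d]]
      unfolding sumK .
  qed
  then obtain md where md: "\<forall>d\<in>?D. md d \<in> {ll d..rr d} \<and> cT w c d / (U d + cn w c d) \<le> pv wh (U d) (ll d) (md d) \<and> (\<forall>i\<in>{ll d..md d}. pv wh (U d) (ll d) (md d) \<le> th i)"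
    by metis
  define pp where "pp d = pv wh (U d) (ll d) (md d)" for d
  define P where "P d = {ll d..md d}" for d
  have PI: "P d \<subseteq> {1..I}" if "d \<in> ?D" for d using md that dI[OF that] unfolding P_def by auto
  have Phull: "P d \<subseteq> {ll d..rr d}" if "d \<in> ?D" for d using md that unfolding P_def by auto
  have Puniq: "d = e" if "d \<in> ?D" "e \<in> ?D" "i \<in> P d" "i \<in> P e" for d e i
  proof (rule ccontr)
    assume "d \<noteq> e"
    then have "{ll d..rr d} \<inter> {ll e..rr e} = {}" using hull_disjoint[OF mono that(1,2)] unfolding ll_def rr_def by blast
    then show False using Phull[OF that(1)] Phull[OF that(2)] that(3,4) by blast
  qed
  have ppge: "pp d \<ge> cT w c d / (U d + cn w c d)" if "d \<in> ?D" for d using md that unfolding pp_def by blast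
  have ppvalid: "\<forall>i\<in>P d. pp d \<le> th i" if "d \<in> ?D" for d using md that unfolding pp_def P_def by blast
  have pppos: "pp d > 0" if d: "d \<in> ?D" for d
  proof -
    have "cT w c d / (U d + cn w c d) > 0" using cn_pos_cT_pos[OF cnp[OF d]] Upos[OF d] cnp[OF d] by simp
    then show ?thesis using ppge[OF d] by linarith
  qed
  define tt where "tt d = (\<Sum>i\<in>P d. wh i * th i)" for d
  define nn where "nn d = (\<Sum>i\<in>P d. wh i)" for d
  have nnnn: "nn d \<ge> 0" if "d \<in> ?D" for d unfolding nn_def using PI[OF that] whp by (intro sum_pos_on_nonneg) auto
  have ppe: "pp d = tt d / (U d + nn d)" for d unfolding pp_def pv_def tt_def nn_def P_def ..
  have rev_d: "(\<Sum>i\<in>P d. wh i * (th i - pp d)) = pp d * U d" if d: "d \<in> ?D" for d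
  proof -
    have dd: "U d + nn d > 0" using Upos[OF d] nnnn[OF d] by linarith
    have "(\<Sum>i\<in>P d. wh i * (th i - pp d)) = tt d - pp d * nn d"
      unfolding tt_def nn_def by (simp add: algebra_simps sum_subtractf sum_distrib_left)
    also have "\<dots> = pp d * U d" unfolding ppe using dd by (simp add: field_simps)
    finally show ?thesis .
  qed
  have res_d: "(\<Sum>i\<in>P d. wh i * (th i / pp d - 1)) = U d" if d: "d \<in> ?D" for d
  proof -
    have dd: "U d + nn d > 0" using Upos[OF d] nnnn[OF d] by linarith
    have ttp: "tt d > 0" using pppos[OF d] dd unfolding ppe by (simp add: zero_less_divide_iff)
    have "(\<Sum>i\<in>P d. wh i * (th i / pp d - 1)) = tt d / pp d - nn d"
      unfolding tt_def nn_def by (simp add: algebra_simps sum_subtractf sum_divide_distrib)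
    also have "\<dots> = U d" unfolding ppe using dd ttp by (simp add: field_simps)
    finally show ?thesis .
  qed
  define inpref where "inpref i \<longleftrightarrow> (\<exists>d\<in>?D. i \<in> P d)" for i
  define cc where "cc i = (if inpref i then (THE d. d \<in> ?D \<and> i \<in> P d) else 1)" for i
  have ccP: "cc i = d" if "d \<in> ?D" "i \<in> P d" for i d
  proof -
    have "inpref i" unfolding inpref_def using that by blast
    moreover have "(THE d. d \<in> ?D \<and> i \<in> P d) = d" using that Puniq by blast
    ultimately show ?thesis unfolding cc_def by simp
  qed
  have ccD: "cc i \<in> ?D \<and> i \<in> P (cc i)" if "inpref i" for i
    using that ccP unfolding inpref_def by metis
  have ccJ: "cc i \<in> {1..J}" for i
    using ccD[of i] Dsub J_ge unfolding cc_def by (cases "inpref i") auto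
  have sumlem: "(\<Sum>i=1..I. if inpref i then h (cc i) i else 0) = (\<Sum>d\<in>?D. \<Sum>i\<in>P d. h d i)" for h :: "nat \<Rightarrow> nat \<Rightarrow> real"
  proof -
    have "(\<Sum>d\<in>?D. \<Sum>i\<in>P d. h d i) = (\<Sum>d\<in>?D. \<Sum>i=1..I. if i \<in> P d then h d i else 0)"
    proof (rule sum.cong[OF refl])
      fix d assume d: "d \<in> ?D"
      show "(\<Sum>i\<in>P d. h d i) = (\<Sum>i=1..I. if i \<in> P d then h d i else 0)"
        using PI[OF d] by (simp add: sum.If_cases Int_absorb1 Int_absorb2)
    qed
    also have "\<dots> = (\<Sum>i=1..I. \<Sum>d\<in>?D. if i \<in> P d then h d i else 0)" by (rule sum.swap)
    also have "\<dots> = (\<Sum>i=1..I. if inpref i then h (cc i) i else 0)"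
    proof (rule sum.cong[OF refl])
      fix i assume "i \<in> {1..I}"
      show "(\<Sum>d\<in>?D. if i \<in> P d then h d i else 0) = (if inpref i then h (cc i) i else 0)"
      proof (cases "inpref i")
        case True
        have "(\<Sum>d\<in>?D. if i \<in> P d then h d i else 0) = (\<Sum>d\<in>?D. if d = cc i then h d i else 0)"
          by (rule sum.cong[OF refl]) (use ccP ccD[OF True] in metis)
        also have "\<dots> = h (cc i) i" using ccD[OF True] finD by (simp add: sum.delta')
        finally show ?thesis using True by simp
      next
        case False
        then show ?thesis unfolding inpref_def by (auto intro: sum.neutral)
      qed
    qed
    finally show ?thesis by simp
  qed
  define pf where "pf j = (if j \<in> ?D then pp j else 1)" for j
  define af where "af i j = (if j = cc i then 1 else 0::nat)" for i j
  define nf where "nf i = (if inpref i then (if w i > 0 then w i else N i) else 0)" for i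
  have pfpos: "pf j > 0" for j unfolding pf_def using pppos by auto
  have gp: "group_price J pf af i = pf (cc i)" for i
  proof -
    have "group_price J pf af i = (\<Sum>j=1..J. if j = cc i then pf j else 0)"
      unfolding group_price_def af_def by (rule sum.cong) auto
    also have "\<dots> = pf (cc i)" using ccJ[of i] by (simp add: sum.delta')
    finally show ?thesis .
  qed
  have pfcc: "pf (cc i) = pp (cc i)" if "inpref i" for i using ccD[OF that] unfolding pf_def by simp
  have thge: "pp (cc i) \<le> th i" if "inpref i" for i using ccD[OF that] ppvalid by blast
  have nfr: "real (nf i) = (if inpref i then wh i else 0)" for i unfolding nf_def wh_def by simp
  have term_res: "real (nf i) * group_demand th J pf af i = (if inpref i then wh i * (th i / pp (cc i) - 1) else 0)" for i
  proof (cases "inpref i")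
    case True
    have p: "pp (cc i) > 0" using pppos ccD[OF True] by blast
    have "th i / pp (cc i) - 1 \<ge> 0" using thge[OF True] p by (simp add: field_simps)
    then show ?thesis using True unfolding group_demand_def pos_part_def gp nfr pfcc[OF True] by simp
  next
    case False then show ?thesis unfolding nfr by simp
  qed
  have term_rev: "real (nf i) * group_price J pf af i * group_demand th J pf af i = (if inpref i then wh i * (th i - pp (cc i)) else 0)" for i
  proof (cases "inpref i")
    case True
    have p: "pp (cc i) > 0" using pppos ccD[OF True] by blast
    have "real (nf i) * group_price J pf af i * group_demand th J pf af i = pp (cc i) * (real (nf i) * group_demand th J pf af i)"
      unfolding gp pfcc[OF True] by simp
    also have "\<dots> = wh i * (th i - pp (cc i))" unfolding term_res using True p by (simp add: field_simps)
    finally show ?thesis using True by simp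
  next
    case False then show ?thesis unfolding nfr by simp
  qed
  have revenue: "ppd_revenue I J th pf af nf = (\<Sum>d\<in>?D. pp d * U d)"
  proof -
    have "ppd_revenue I J th pf af nf = (\<Sum>i=1..I. if inpref i then wh i * (th i - pp (cc i)) else 0)"
      unfolding ppd_revenue_def by (simp add: term_rev)
    also have "\<dots> = (\<Sum>d\<in>?D. \<Sum>i\<in>P d. wh i * (th i - pp d))" by (rule sumlem)
    also have "\<dots> = (\<Sum>d\<in>?D. pp d * U d)" by (rule sum.cong) (simp_all add: rev_d)
    finally show ?thesis .
  qed
  have resource: "(\<Sum>i=1..I. real (nf i) * group_demand th J pf af i) = (\<Sum>d\<in>?D. U d)"
  proof -
    have "(\<Sum>i=1..I. real (nf i) * group_demand th J pf af i) = (\<Sum>i=1..I. if inpref i then wh i * (th i / pp (cc i) - 1) else 0)"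
      by (simp add: term_res)
    also have "\<dots> = (\<Sum>d\<in>?D. \<Sum>i\<in>P d. wh i * (th i / pp d - 1))" by (rule sumlem)
    also have "\<dots> = (\<Sum>d\<in>?D. U d)" by (rule sum.cong) (simp_all add: res_d)
    finally show ?thesis .
  qed
  have zD: "cn w c d = 0" if "d \<in> {1..J}" "d \<notin> ?D" for d using that cn_nonneg[of w c d] unfolding Dn_def by auto
  have FfD: "Ff w c = (\<Sum>d\<in>?D. f d)" unfolding Ff_def f_def by (rule sum_over_Dn) (use zD in simp)
  have ntD: "nt w = (\<Sum>d\<in>?D. cn w c d)" unfolding sum_cn[OF cfg, symmetric] by (rule sum_over_Dn) (use zD in simp)
  have TtD: "Tt w = (\<Sum>d\<in>?D. cT w c d)" unfolding sum_cT[OF cfg, symmetric] by (rule sum_over_Dn) (use zD cn_zero_cT in simp)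
  have sumU: "(\<Sum>d\<in>?D. U d) = S"
  proof -
    have "(\<Sum>d\<in>?D. U d) = Ff w c / m - nt w" unfolding U_def FfD ntD by (simp add: sum_subtractf sum_divide_distrib)
    also have "\<dots> = S" using Feq mpos by simp
    finally show ?thesis .
  qed
  have Vle: "Vv w c \<le> ppd_revenue I J th pf af nf"
  proof -
    have "Vv w c = (\<Sum>d\<in>?D. cT w c d - m * f d)" unfolding Vv_def m_def[symmetric] TtD FfD by (simp add: sum_subtractf sum_distrib_left)
    also have "\<dots> = (\<Sum>d\<in>?D. cT w c d / (U d + cn w c d) * U d)" by (rule sum.cong[OF refl]) (use rhoU in metis)
    also have "\<dots> \<le> (\<Sum>d\<in>?D. pp d * U d)"
    proof (rule sum_mono)
      fix d assume d: "d \<in> ?D"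
      show "cT w c d / (U d + cn w c d) * U d \<le> pp d * U d"
        using ppge[OF d] Upos[OF d] by (intro mult_right_mono) auto
    qed
    finally show ?thesis unfolding revenue .
  qed
  have feas: "ppd_feasible S I J N th pf af nf"
    unfolding ppd_feasible_def
  proof (intro conjI ballI)
    show "\<And>j. 0 < pf j" by (rule pfpos)
    show "\<And>i j. af i j \<in> {0, 1}" unfolding af_def by simp
    show "(\<Sum>j=1..J. af i j) = 1" for i unfolding af_def using ccJ[of i] by (simp add: sum.delta')
    show "nf i \<le> N i" if "i \<in> {1..I}" for i unfolding nf_def using wN that by auto
    show "(\<Sum>i=1..I. real (nf i) * group_demand th J pf af i) \<le> S" unfolding resource sumU by simp
  qed
  have clus: "cluster I J th pf af nf j = {} \<or> (\<exists>l m. cluster I J th pf af nf j = {l..m})" if j: "j \<in> {1..J}" for j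
  proof -
    have iff: "(real (nf i) * group_demand th J pf af i > 0 \<and> af i j = 1) \<longleftrightarrow> (j \<in> ?D \<and> i \<in> P j \<and> th i > pp j)" for i
    proof
      assume H: "real (nf i) * group_demand th J pf af i > 0 \<and> af i j = 1"
      then have ip: "inpref i" using term_res[of i] by (cases "inpref i") auto
      have cj: "cc i = j" using H unfolding af_def by (auto split: if_splits)
      have "wh i * (th i / pp (cc i) - 1) > 0" using H term_res[of i] ip by simp
      moreover have "wh i > 0" using whp PI ccD[OF ip] by blast
      ultimately have "th i / pp (cc i) > 1" by (simp add: zero_less_mult_iff)
      then have "th i > pp (cc i)" using pppos ccD[OF ip] by (simp add: less_divide_eq)
      then show "j \<in> ?D \<and> i \<in> P j \<and> th i > pp j" using ccD[OF ip] cj by simp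
    next
      assume H: "j \<in> ?D \<and> i \<in> P j \<and> th i > pp j"
      then have ip: "inpref i" unfolding inpref_def by blast
      have cj: "cc i = j" using ccP H by blast
      have "wh i > 0" using whp PI H by blast
      moreover have "th i / pp j - 1 > 0" using H pppos by (simp add: field_simps)
      ultimately have "real (nf i) * group_demand th J pf af i > 0" using term_res[of i] ip cj by simp
      then show "real (nf i) * group_demand th J pf af i > 0 \<and> af i j = 1" unfolding af_def using cj by simp
    qed
    have ceq: "cluster I J th pf af nf j = {i \<in> {1..I}. j \<in> ?D \<and> i \<in> P j \<and> th i > pp j}"
      unfolding cluster_def using iff by blast
    show ?thesis
    proof (cases "j \<in> ?D")
      case False then show ?thesis unfolding ceq by simp
    next
      case True
      have "{i \<in> {1..I}. j \<in> ?D \<and> i \<in> P j \<and> th i > pp j} = {i \<in> {ll j..md j}. th i > pp j}"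
        using PI[OF True] True unfolding P_def by auto
      moreover have "1 \<le> ll j" "md j \<le> I" using dI[OF True] md True by auto
      ultimately show ?thesis unfolding ceq using interval_set by simp
    qed
  qed
  show ?thesis using feas Vle clus by blast
qed

end

context ppd begin

lemma sel_exists:
  assumes feas: "ppd_feasible S I J N th p a n" and i: "i \<in> {1..I}"
  shows "\<exists>j\<in>{1..J}. a i j = 1 \<and> (\<forall>k\<in>{1..J}. k \<noteq> j \<longrightarrow> a i k = 0)"
proof -
  have a01: "\<forall>j\<in>{1..J}. a i j \<in> {0, 1}" and s1: "(\<Sum>j=1..J. a i j) = 1"
    using feas i unfolding ppd_feasible_def by auto
  obtain j where j: "j \<in> {1..J}" "a i j = 1"
  proof -
    have "\<exists>j\<in>{1..J}. a i j \<noteq> 0" using s1 by (metis sum.neutral zero_neq_one)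
    then show ?thesis using that a01 by auto
  qed
  have "\<forall>k\<in>{1..J}. k \<noteq> j \<longrightarrow> a i k = 0"
  proof (intro ballI impI)
    fix k assume k: "k \<in> {1..J}" "k \<noteq> j"
    show "a i k = 0"
    proof (rule ccontr)
      assume "a i k \<noteq> 0"
      moreover have "a i k \<in> {0, 1}" using a01 k by blast
      ultimately have ak: "a i k = 1" by auto
      have "(\<Sum>x\<in>{j, k}. a i x) \<le> (\<Sum>x=1..J. a i x)"
        by (rule sum_mono2) (use j k in auto)
      then show False using ak j k s1 by simp
    qed
  qed
  then show ?thesis using j by blast
qed

definition jsel :: "(nat \<Rightarrow> nat \<Rightarrow> nat) \<Rightarrow> nat \<Rightarrow> nat" where
  "jsel a i = (LEAST j. j \<in> {1..J} \<and> a i j = 1)"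

lemma jsel_props:
  assumes feas: "ppd_feasible S I J N th p a n" and i: "i \<in> {1..I}"
  shows "jsel a i \<in> {1..J}" "group_price J p a i = p (jsel a i)"
proof -
  obtain j where j: "j \<in> {1..J}" "a i j = 1" "\<forall>k\<in>{1..J}. k \<noteq> j \<longrightarrow> a i k = 0"
    using sel_exists[OF feas i] by blast
  have "jsel a i = j" unfolding jsel_def
  proof (rule Least_equality)
    show "j \<in> {1..J} \<and> a i j = 1" using j by simp
    fix y assume "y \<in> {1..J} \<and> a i y = 1"
    then have "y = j" using j by (metis zero_neq_one)
    then show "j \<le> y" by simp
  qed
  then show "jsel a i \<in> {1..J}" using j by simp
  have "group_price J p a i = (\<Sum>k=1..J. if k = j then p k else 0)"
    unfolding group_price_def by (rule sum.cong) (use j in auto)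
  also have "\<dots> = p j" using j by (simp add: sum.delta')
  finally show "group_price J p a i = p (jsel a i)" using \<open>jsel a i = j\<close> by simp
qed

lemma group_sum_c:
  fixes g :: "nat \<Rightarrow> nat \<Rightarrow> real"
  assumes "cfg c"
  shows "(\<Sum>d=1..J. \<Sum>i=1..I. if c i = d then g i d else 0) = (\<Sum>i=1..I. g i (c i))"
proof -
  have "(\<Sum>d=1..J. \<Sum>i=1..I. if c i = d then g i d else 0) = (\<Sum>i=1..I. if c i \<in> {1..J} then g i (c i) else 0)"
    by (rule sum_group) auto
  also have "\<dots> = (\<Sum>i=1..I. g i (c i))" by (rule sum.cong) (use assms in \<open>auto simp: cfg_def\<close>)
  finally show ?thesis .
qed

definition Nm :: nat where "Nm = (\<Sum>i=1..I. N i)"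

definition Mset :: "((nat \<Rightarrow> nat) \<times> (nat \<Rightarrow> nat)) set" where
  "Mset = {(w, c). (\<forall>x. (x \<in> {1..I} \<longrightarrow> w x \<in> {0..Nm}) \<and> (x \<notin> {1..I} \<longrightarrow> w x = 0)) \<and>
      (\<forall>x. (x \<in> {1..I} \<longrightarrow> c x \<in> {1..J}) \<and> (x \<notin> {1..I} \<longrightarrow> c x = 0)) \<and>
      (\<forall>i\<in>{1..I}. w i \<le> N i) \<and> good w c \<and> mono w c}"

lemma upper:
  assumes feas: "ppd_feasible S I J N th p a n"
  shows "\<exists>x\<in>Mset. ppd_revenue I J th p a n \<le> Vv (fst x) (snd x)"
proof -
  define c0 where "c0 i = (if i \<in> {1..I} then jsel a i else 0)" for i
  define w0 where "w0 i = (if i \<in> {1..I} \<and> th i > p (c0 i) then n i else 0)" for i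
  have cfg: "cfg c0" unfolding cfg_def c0_def using jsel_props(1)[OF feas] by auto
  have gp: "group_price J p a i = p (c0 i)" if "i \<in> {1..I}" for i
    unfolding c0_def using jsel_props(2)[OF feas that] that by simp
  have ppos: "\<forall>d\<in>{1..J}. p d > 0" using feas unfolding ppd_feasible_def by blast
  have pc0: "p (c0 i) > 0" if "i \<in> {1..I}" for i using ppos cfg that unfolding cfg_def by blast
  have trev: "real (n i) * group_price J p a i * group_demand th J p a i = real (w0 i) * (th i - p (c0 i))"
    if i: "i \<in> {1..I}" for i
  proof -
    have q: "p (c0 i) > 0" using pc0[OF i] .
    show ?thesis
    proof (cases "th i > p (c0 i)")
      case True
      then have "th i / p (c0 i) - 1 > 0" using q by (simp add: field_simps)
      then show ?thesis unfolding group_demand_def pos_part_def gp[OF i] w0_def using True i q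
        by (simp add: field_simps)
    next
      case False
      then have "th i / p (c0 i) - 1 \<le> 0" using q by (simp add: field_simps)
      then show ?thesis unfolding group_demand_def pos_part_def gp[OF i] w0_def using False i by simp
    qed
  qed
  have tres: "real (n i) * group_demand th J p a i = real (w0 i) * (th i / p (c0 i) - 1)"
    if i: "i \<in> {1..I}" for i
  proof -
    have q: "p (c0 i) > 0" using pc0[OF i] .
    show ?thesis
    proof (cases "th i > p (c0 i)")
      case True
      then have "th i / p (c0 i) - 1 > 0" using q by (simp add: field_simps)
      then show ?thesis unfolding group_demand_def pos_part_def gp[OF i] w0_def using True i by simp
    next
      case False
      then have "th i / p (c0 i) - 1 \<le> 0" using q by (simp add: field_simps)
      then show ?thesis unfolding group_demand_def pos_part_def gp[OF i] w0_def using False i by simp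
    qed
  qed
  have e_rev: "cT w0 c0 d - cn w0 c0 d * p d = (\<Sum>i=1..I. if c0 i = d then real (w0 i) * (th i - p d) else 0)" for d
  proof -
    have "(\<Sum>i=1..I. if c0 i = d then real (w0 i) * (th i - p d) else 0)
      = (\<Sum>i=1..I. (if c0 i = d then real (w0 i) * th i else 0) - (if c0 i = d then real (w0 i) else 0) * p d)"
      by (rule sum.cong) (auto simp: algebra_simps)
    then show ?thesis unfolding cT_def cn_def by (simp add: sum_subtractf sum_distrib_right)
  qed
  have e_res: "cT w0 c0 d / p d - cn w0 c0 d = (\<Sum>i=1..I. if c0 i = d then real (w0 i) * (th i / p d - 1) else 0)" for d
  proof -
    have "(\<Sum>i=1..I. if c0 i = d then real (w0 i) * (th i / p d - 1) else 0)
      = (\<Sum>i=1..I. (if c0 i = d then real (w0 i) * th i else 0) / p d - (if c0 i = d then real (w0 i) else 0))"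
      by (rule sum.cong) (auto simp: algebra_simps)
    then show ?thesis unfolding cT_def cn_def by (simp add: sum_subtractf sum_divide_distrib)
  qed
  have R: "ppd_revenue I J th p a n = (\<Sum>d=1..J. cT w0 c0 d - cn w0 c0 d * p d)"
  proof -
    have "(\<Sum>d=1..J. cT w0 c0 d - cn w0 c0 d * p d) = (\<Sum>i=1..I. real (w0 i) * (th i - p (c0 i)))"
      unfolding e_rev by (rule group_sum_c[OF cfg])
    also have "\<dots> = ppd_revenue I J th p a n" unfolding ppd_revenue_def by (rule sum.cong) (simp_all add: trev)
    finally show ?thesis by simp
  qed
  have Res: "(\<Sum>d=1..J. cT w0 c0 d / p d - cn w0 c0 d) \<le> S"
  proof -
    have "(\<Sum>d=1..J. cT w0 c0 d / p d - cn w0 c0 d) = (\<Sum>i=1..I. real (w0 i) * (th i / p (c0 i) - 1))"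
      unfolding e_res by (rule group_sum_c[OF cfg])
    also have "\<dots> = (\<Sum>i=1..I. real (n i) * group_demand th J p a i)" by (rule sum.cong) (simp_all add: tres)
    also have "\<dots> \<le> S" using feas unfolding ppd_feasible_def by blast
    finally show ?thesis .
  qed
  have cnp: "\<forall>d\<in>{1..J}. cn w0 c0 d * p d \<le> cT w0 c0 d"
  proof
    fix d assume d: "d \<in> {1..J}"
    have "0 \<le> (\<Sum>i=1..I. if c0 i = d then real (w0 i) * (th i - p d) else 0)"
      by (rule sum_nonneg) (auto simp: w0_def)
    then show "cn w0 c0 d * p d \<le> cT w0 c0 d" using e_rev[of d] by simp
  qed
  obtain D where D: "D \<subseteq> {1..J}" "cons (restr w0 c0 D) c0"
      "(\<Sum>d=1..J. cT w0 c0 d - cn w0 c0 d * p d) \<le> Vv (restr w0 c0 D) c0"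
    using from_priceconfig[OF cfg ppos cnp Res] by blast
  have "(\<forall>i. restr w0 c0 D i = 0 \<or> restr w0 c0 D i = w0 i) \<and> cons (restr w0 c0 D) c0 \<and> ppd_revenue I J th p a n \<le> Vv (restr w0 c0 D) c0"
    using D R unfolding restr_def by auto
  then obtain w2 where w2: "\<forall>i. w2 i = 0 \<or> w2 i = w0 i" "cons w2 c0" "ppd_revenue I J th p a n \<le> Vv w2 c0" "good w2 c0"
    using minimal_good[OF cfg] by blast
  define c' where "c' = reas w2 c0"
  have re: "cfg c' \<and> good w2 c' \<and> mono w2 c' \<and> Vv w2 c0 \<le> Vv w2 c'"
    unfolding c'_def by (rule reassign[OF cfg w2(4)])
  have w2N: "w2 i \<le> N i" if "i \<in> {1..I}" for i
  proof -
    have "n i \<le> N i" using feas that unfolding ppd_feasible_def by blast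
    then show ?thesis using w2(1)[rule_format, of i] unfolding w0_def by auto
  qed
  have NNm: "N i \<le> Nm" if "i \<in> {1..I}" for i unfolding Nm_def by (rule member_le_sum) (use that in auto)
  have "(w2, c') \<in> Mset" unfolding Mset_def
  proof (clarify, intro conjI allI impI ballI)
    fix x
    show "x \<in> {1..I} \<Longrightarrow> w2 x \<in> {0..Nm}" using w2N NNm by (auto intro: le_trans)
    show "x \<notin> {1..I} \<Longrightarrow> w2 x = 0" using w2(1)[rule_format, of x] unfolding w0_def by auto
    show "x \<in> {1..I} \<Longrightarrow> c' x \<in> {1..J}" using re unfolding cfg_def by blast
    show "x \<notin> {1..I} \<Longrightarrow> c' x = 0" by (auto simp: c'_def reas_def)
  next
    fix i assume "i \<in> {1..I}" then show "w2 i \<le> N i" by (rule w2N)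
  next
    show "good w2 c'" "mono w2 c'" using re by blast+
  qed
  then show ?thesis using w2(3) re by (intro bexI[of _ "(w2, c')"]) auto
qed


lemma finite_Mset: "finite Mset"
proof -
  define W where "W = {w :: nat \<Rightarrow> nat. \<forall>x. (x \<in> {1..I} \<longrightarrow> w x \<in> {0..Nm}) \<and> (x \<notin> {1..I} \<longrightarrow> w x = 0)}"
  define C where "C = {c :: nat \<Rightarrow> nat. \<forall>x. (x \<in> {1..I} \<longrightarrow> c x \<in> {1..J}) \<and> (x \<notin> {1..I} \<longrightarrow> c x = 0)}"
  have "finite W" unfolding W_def by (rule finite_set_of_finite_funs) auto
  moreover have "finite C" unfolding C_def by (rule finite_set_of_finite_funs) auto
  ultimately have "finite (W \<times> C)" by simp
  moreover have "Mset \<subseteq> W \<times> C" unfolding Mset_def W_def C_def by auto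
  ultimately show ?thesis using finite_subset by blast
qed

lemma finite_argmax': fixes f :: "'a \<Rightarrow> real" shows "finite A \<Longrightarrow> A \<noteq> {} \<Longrightarrow> \<exists>a\<in>A. \<forall>b\<in>A. f b \<le> f a"
proof -
  assume A: "finite A" "A \<noteq> {}"
  define m where "m = Max (f ` A)"
  have "m \<in> f ` A" unfolding m_def using A by simp
  then obtain a where a: "a \<in> A" "f a = m" by auto
  have "\<forall>b\<in>A. f b \<le> m" unfolding m_def using A by simp
  then show ?thesis using a by auto
qed

lemma Vv_nomember: assumes "\<forall>i\<in>{1..I}. w i = 0" shows "Vv w c = 0"
proof -
  have "Tt w = 0" unfolding Tt_def using assms by simp
  moreover have "cn w c d = 0" for d unfolding cn_def using assms by (intro sum.neutral) auto
  then have "Ff w c = 0" unfolding Ff_def by simp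
  ultimately show ?thesis unfolding Vv_def by simp
qed

theorem main_locale:
  "\<exists>p a n. ppd_feasible S I J N th p a n \<and>
     (\<forall>p' a' n'. ppd_feasible S I J N th p' a' n' \<longrightarrow> ppd_revenue I J th p' a' n' \<le> ppd_revenue I J th p a n) \<and>
     (\<forall>j\<in>{1..J}. cluster I J th p a n j = {} \<or> (\<exists>l m. cluster I J th p a n j = {l..m}))"
proof -
  define p0 where "p0 = (\<lambda>_::nat. 1::real)"
  define a0 where "a0 = (\<lambda>(i::nat) (j::nat). if j = 1 then 1 else (0::nat))"
  define n0 where "n0 = (\<lambda>_::nat. 0::nat)"
  have feas0: "ppd_feasible S I J N th p0 a0 n0"
    unfolding ppd_feasible_def p0_def a0_def n0_def using J_ge S_pos by (simp add: sum.delta')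
  have rev0: "ppd_revenue I J th p0 a0 n0 = 0" unfolding ppd_revenue_def n0_def by simp
  have clus0: "cluster I J th p0 a0 n0 j = {}" for j unfolding cluster_def n0_def by simp
  have neM: "Mset \<noteq> {}" using upper[OF feas0] by blast
  obtain xb where xb: "xb \<in> Mset" "\<forall>x\<in>Mset. Vv (fst x) (snd x) \<le> Vv (fst xb) (snd xb)"
    using finite_argmax'[OF finite_Mset neM, of "\<lambda>x. Vv (fst x) (snd x)"] by blast
  obtain wb cb where xbe: "xb = (wb, cb)" by (cases xb)
  have Mb: "\<forall>x. (x \<in> {1..I} \<longrightarrow> cb x \<in> {1..J})" "\<forall>i\<in>{1..I}. wb i \<le> N i" "good wb cb" "mono wb cb"
    using xb(1) unfolding xbe Mset_def by auto
  have cfgb: "cfg cb" unfolding cfg_def using Mb(1) by blast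
  obtain p a n where X: "ppd_feasible S I J N th p a n" "Vv wb cb \<le> ppd_revenue I J th p a n"
     "\<forall>j\<in>{1..J}. cluster I J th p a n j = {} \<or> (\<exists>l m. cluster I J th p a n j = {l..m})"
  proof (cases "\<exists>i\<in>{1..I}. wb i > 0")
    case True
    then obtain i0 where "i0 \<in> {1..I}" "wb i0 > 0" by blast
    then show ?thesis using realize[OF cfgb Mb(3) Mb(4) Mb(2)] that by blast
  next
    case False
    then have "Vv wb cb = 0" using Vv_nomember by auto
    then show ?thesis using that[of p0 a0 n0] feas0 rev0 clus0 by simp
  qed
  have opt: "ppd_revenue I J th p' a' n' \<le> ppd_revenue I J th p a n" if F: "ppd_feasible S I J N th p' a' n'" for p' a' n'
  proof -
    obtain x where x: "x \<in> Mset" "ppd_revenue I J th p' a' n' \<le> Vv (fst x) (snd x)" using upper[OF F] by blast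
    have "Vv (fst x) (snd x) \<le> Vv wb cb" using xb(2) x(1) unfolding xbe by auto
    then show ?thesis using x(2) X(2) by linarith
  qed
  show ?thesis using X opt by blast
qed

end

theorem theorem4:
  fixes S :: real and I J :: nat and N :: "nat \<Rightarrow> nat" and \<theta> :: "nat \<Rightarrow> real"
  assumes "S > 0" and "I \<ge> 1" and "1 \<le> J" and "J \<le> I"
    and "\<forall>i\<in>{1..I}. N i > 0"
    and "\<forall>i\<in>{1..I}. \<theta> i > 0"
    and "\<forall>i\<in>{1..I}. \<forall>k\<in>{1..I}. i < k \<longrightarrow> \<theta> k < \<theta> i"
  shows "\<exists>p a n. ppd_feasible S I J N \<theta> p a n \<and>
           (\<forall>p' a' n'. ppd_feasible S I J N \<theta> p' a' n' \<longrightarrow>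
               ppd_revenue I J \<theta> p' a' n' \<le> ppd_revenue I J \<theta> p a n) \<and>
           (\<forall>j\<in>{1..J}. cluster I J \<theta> p a n j = {} \<or>
               (\<exists>l m. cluster I J \<theta> p a n j = {l..m}))"
proof -
  interpret ppd S I J N \<theta>
    by unfold_locales (use assms in auto)
  show ?thesis by (rule main_locale)
qed

end
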